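(* There is an absolute constant $c>0$ such that the following holds. Let $G$ be a simple undirected graph presented as a stream of $m$ distinct edges $e_1,\dots,e_m$, with $W$ wedges and $T\ge 1$ triangles, and let $\kappa = 3T/W$. Assume $W \ge m$ and fix $\beta\in(0,1)$. Run the algorithm Single-Bit with a reservoir of $s$ slots, where $s \ge c\,m/(\beta^3\sqrt{T})$, and let $b_m$ be its output bit at the final time $m$ and $\mathcal{W}_m$ its wedge multiset at time $m$. Set $est = m^2|\mathcal{W}_m|/(s(s-1))$. Then $|\kappa/3 - \mathbf{E}[b_m]| < \beta$, and with probability greater than $1-\beta$, $|W - est| < \beta W$.
   Context: A wedge in a graph is a path of length 2, i.e. an unordered pair of distinct edges sharing exactly one vertex; $W$ is the number of wedges of $G$. A wedge is closed if the edge joining its two non-shared endpoints is in the graph. $G_t$ is the graph on edges $\{e_1,\dots,e_t\}$. Algorithm Single-Bit (with reservoir size $s$): it maintains a reservoir $\mathcal{R}_t=(r_1,\dots,r_s)$ of $s$ edge slots. At each time $t=1,\dots,m$, each slot of $\mathcal{R}_{t-1}$ is independently replaced by $e_t$ with probability $1/t$, giving $\mathcal{R}_t$ (so at $t=1$ all slots hold $e_1$). $\mathcal{W}_t$ is the multiset of wedges $\{r_i,r_j\}$, $i<j$, formed by pairs of slots of $\mathcal{R}_t$ (one element per slot pair forming a wedge). $\mathcal{D}_t$ is the set of elements of $\mathcal{W}_t$ closed by $e_t$ (i.e. $e_t$ joins the two non-shared endpoints). With $\mathcal{C}_0=\emptyset$, set $\mathcal{C}_t = (\mathcal{C}_{t-1}\cap\mathcal{W}_t)\cup\mathcal{D}_t$.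 If $\mathcal{W}_t$ is empty, output $b_t=0$; otherwise pick a uniformly random element of $\mathcal{W}_t$ and output $b_t=1$ if it lies in $\mathcal{C}_t$ and $b_t=0$ otherwise. The expectation is over the randomness of the algorithm; the stream order is arbitrary but fixed. *)

theory Defs
  imports "HOL-Probability.Probability"
begin

type_synonym edge = "nat set"

definition is_edge :: "edge \<Rightarrow> bool" where
  "is_edge e \<longleftrightarrow> card e = 2"

definition is_wedge :: "edge \<Rightarrow> edge \<Rightarrow> bool" where
  "is_wedge e f \<longleftrightarrow> e \<noteq> f \<and> card (e \<inter> f) = 1"

definition closing_edge :: "edge \<Rightarrow> edge \<Rightarrow> edge" where
  "closing_edge e f = (e \<union> f) - (e \<inter> f)"

definition num_wedges :: "edge set \<Rightarrow> nat" where
  "num_wedges E = card {{e, f} | e f. e \<in> E \<and> f \<in> E \<and> is_wedge e f}"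

definition num_triangles :: "edge set \<Rightarrow> nat" where
  "num_triangles E = card {X :: nat set. card X = 3 \<and>
      (\<forall>x\<in>X. \<forall>y\<in>X. x \<noteq> y \<longrightarrow> {x, y} \<in> E)}"

text \<open>Reservoir: slots 0..s-1, a state is the reservoir together with the set
  C of slot pairs (i,j), i<j, whose wedge is marked closed.\<close>
type_synonym state = "(nat \<Rightarrow> edge) \<times> (nat \<times> nat) set"

text \<open>The wedge multiset W_t, represented by the slot pairs forming a wedge.\<close>
definition wedge_pairs :: "nat \<Rightarrow> (nat \<Rightarrow> edge) \<Rightarrow> (nat \<times> nat) set" where
  "wedge_pairs s R = {(i, j). i < j \<and> j < s \<and> is_wedge (R i) (R j)}"

definition sb_step :: "nat \<Rightarrow> nat \<Rightarrow> edge \<Rightarrow> state \<Rightarrow> state pmf" where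
  "sb_step s t e st =
     map_pmf (\<lambda>mask.
        let R = fst st; C = snd st;
            R' = (\<lambda>i. if mask i then e else R i);
            W' = wedge_pairs s R';
            D = {(i, j) \<in> W'. e = closing_edge (R' i) (R' j)};
            Ckeep = {(i, j) \<in> C \<inter> W'. \<not> mask i \<and> \<not> mask j}
        in (R', Ckeep \<union> D))
     (Pi_pmf {..<s} False (\<lambda>_. bernoulli_pmf (1 / real t)))"

fun sb_state :: "nat \<Rightarrow> edge list \<Rightarrow> nat \<Rightarrow> state pmf" where
  "sb_state s es 0 = return_pmf (\<lambda>_. {}, {})"
| "sb_state s es (Suc t) = sb_state s es t \<bind> sb_step s (Suc t) (es ! t)"

definition sb_output :: "nat \<Rightarrow> state \<Rightarrow> bool pmf" where
  "sb_output s st =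
     (if wedge_pairs s (fst st) = {} then return_pmf False
      else map_pmf (\<lambda>p. p \<in> snd st) (pmf_of_set (wedge_pairs s (fst st))))"

definition sb_final_bit :: "nat \<Rightarrow> edge list \<Rightarrow> bool pmf" where
  "sb_final_bit s es = sb_state s es (length es) \<bind> sb_output s"

definition sb_est :: "nat \<Rightarrow> nat \<Rightarrow> state \<Rightarrow> real" where
  "sb_est s m st = real m ^ 2 * real (card (wedge_pairs s (fst st))) / (real s * (real s - 1))"

end

theory Submission
  imports Defs
begin


lemma exp_bind_fin:
  fixes h :: "'b \<Rightarrow> real"
  assumes "finite (set_pmf p)" "\<And>x. x \<in> set_pmf p \<Longrightarrow> finite (set_pmf (f x))"
  shows "measure_pmf.expectation (p \<bind> f) h = measure_pmf.expectation p (\<lambda>x. measure_pmf.expectation (f x) h)"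
proof -
  have "measure_pmf.expectation (p \<bind> f) h = (\<Sum>a\<in>set_pmf p. pmf p a *\<^sub>R measure_pmf.expectation (f a) h)"
    using assms by (intro pmf_expectation_bind) auto
  also have "\<dots> = measure_pmf.expectation p (\<lambda>x. measure_pmf.expectation (f x) h)"
    using assms by (subst integral_measure_pmf[of "set_pmf p"]) (auto simp: mult.commute)
  finally show ?thesis .
qed

lemma finite_set_Pi_pmf:
  assumes "finite A" "\<And>x. x \<in> A \<Longrightarrow> finite (set_pmf (p x))"
  shows "finite (set_pmf (Pi_pmf A d p))"
proof -
  have "finite (PiE_dflt A d (set_pmf \<circ> p))"
    using assms by (intro finite_PiE_dflt) auto
  thus ?thesis using set_Pi_pmf_subset'[OF assms(1), of d p] finite_subset by blast
qed

lemma exp_Pi_split: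
  fixes h :: "('a \<Rightarrow> 'b) \<Rightarrow> real"
  assumes "finite A" "x \<in> A" "\<And>x. x \<in> A \<Longrightarrow> finite (set_pmf (p x))"
  shows "measure_pmf.expectation (Pi_pmf A d p) h =
     measure_pmf.expectation (p x) (\<lambda>y. measure_pmf.expectation (Pi_pmf (A - {x}) d p) (\<lambda>f. h (f(x:=y))))"
proof -
  have A: "A = insert x (A - {x})" using assms by auto
  have fin: "finite (set_pmf (Pi_pmf (A - {x}) d p))"
    using assms by (intro finite_set_Pi_pmf) auto
  have "Pi_pmf A d p = p x \<bind> (\<lambda>y. Pi_pmf (A - {x}) d p \<bind> (\<lambda>f. return_pmf (f(x := y))))"
    by (subst A, subst Pi_pmf_insert') (use assms in auto)
  also have "measure_pmf.expectation \<dots> h = measure_pmf.expectation (p x) (\<lambda>y. measure_pmf.expectation (Pi_pmf (A - {x}) d p \<bind> (\<lambda>f. return_pmf (f(x := y)))) h)"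
    apply (rule exp_bind_fin) using assms fin by auto
  also have "\<dots> = measure_pmf.expectation (p x) (\<lambda>y. measure_pmf.expectation (Pi_pmf (A - {x}) d p) (\<lambda>f. h (f(x:=y))))"
    apply (rule Bochner_Integration.integral_cong[OF refl])
    apply (subst exp_bind_fin) using fin by auto
  finally show ?thesis .
qed


lemma exp_const_pmf[simp]: "measure_pmf.expectation p (\<lambda>x. c::real) = c"
  by (simp add: measure_pmf.prob_space)

lemma M1:
  fixes h :: "'b \<Rightarrow> real"
  assumes "finite A" "i \<in> A" "finite (set_pmf u)"
  shows "measure_pmf.expectation (Pi_pmf A d (\<lambda>_. u)) (\<lambda>R. h (R i)) = measure_pmf.expectation u h"
  by (subst exp_Pi_split[of A i]) (use assms in auto)

lemma M2:
  fixes h :: "'b \<Rightarrow> 'b \<Rightarrow> real"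
  assumes "finite A" "i \<in> A" "j \<in> A" "i \<noteq> j" "finite (set_pmf u)"
  shows "measure_pmf.expectation (Pi_pmf A d (\<lambda>_. u)) (\<lambda>R. h (R i) (R j)) =
         measure_pmf.expectation u (\<lambda>a. measure_pmf.expectation u (\<lambda>b. h a b))"
  apply (subst exp_Pi_split[of A i]) using assms apply auto[3]
  apply (rule Bochner_Integration.integral_cong[OF refl])
  using assms by (simp add: M1)

lemma M3:
  fixes h :: "'b \<Rightarrow> 'b \<Rightarrow> 'b \<Rightarrow> real"
  assumes "finite A" "i \<in> A" "j \<in> A" "k \<in> A" "i \<noteq> j" "i \<noteq> k" "j \<noteq> k" "finite (set_pmf u)"
  shows "measure_pmf.expectation (Pi_pmf A d (\<lambda>_. u)) (\<lambda>R. h (R i) (R j) (R k)) =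
         measure_pmf.expectation u (\<lambda>a. measure_pmf.expectation u (\<lambda>b. measure_pmf.expectation u (\<lambda>c. h a b c)))"
  apply (subst exp_Pi_split[of A i]) using assms apply auto[3]
  apply (rule Bochner_Integration.integral_cong[OF refl])
  using assms by (simp add: M2)

lemma M4:
  fixes h :: "'b \<Rightarrow> 'b \<Rightarrow> 'b \<Rightarrow> 'b \<Rightarrow> real"
  assumes "finite A" "i \<in> A" "j \<in> A" "k \<in> A" "l \<in> A" "i \<noteq> j" "i \<noteq> k" "j \<noteq> k" "i \<noteq> l" "j \<noteq> l" "k \<noteq> l" "finite (set_pmf u)"
  shows "measure_pmf.expectation (Pi_pmf A d (\<lambda>_. u)) (\<lambda>R. h (R i) (R j) (R k) (R l)) =
         measure_pmf.expectation u (\<lambda>a. measure_pmf.expectation u (\<lambda>b. measure_pmf.expectation u (\<lambda>c. measure_pmf.expectation u (\<lambda>e. h a b c e))))"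
  apply (subst exp_Pi_split[of A i]) using assms apply auto[3]
  apply (rule Bochner_Integration.integral_cong[OF refl])
  using assms by (simp add: M3)


lemma int_mult_left_pmf: "measure_pmf.expectation p (\<lambda>x. c * f x) = c * measure_pmf.expectation p (f::_\<Rightarrow>real)"
  by simp
lemma int_mult_right_pmf: "measure_pmf.expectation p (\<lambda>x. f x * c) = measure_pmf.expectation p (f::_\<Rightarrow>real) * c"
  by simp

locale vsetup =
  fixes s :: nat and u :: "'b pmf" and d :: 'b and g :: "'b \<Rightarrow> 'b \<Rightarrow> real"
  assumes fin: "finite (set_pmf u)"
    and gsym: "\<And>a b. g a b = g b a"
    and gnn: "\<And>a b. 0 \<le> g a b" and gle: "\<And>a b. g a b \<le> 1"
begin

definition "Q = Pi_pmf {..<s} d (\<lambda>_. u)"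
definition "P = {(i,j). i < j \<and> j < (s::nat)}"
definition "Z R = (\<Sum>p\<in>P. g (R (fst p)) (R (snd p)))"
definition "\<gamma> = measure_pmf.expectation u (\<lambda>a. measure_pmf.expectation u (\<lambda>b. g a b))"
definition "\<eta> = measure_pmf.expectation u (\<lambda>a. (measure_pmf.expectation u (\<lambda>b. g a b))^2)"

lemma finP: "finite P"
proof -
  have "P \<subseteq> {..<s} \<times> {..<s}" by (auto simp: P_def)
  thus ?thesis by (rule finite_subset) auto
qed

lemma cardP: "card P \<le> s^2"
proof -
  have "P \<subseteq> {..<s} \<times> {..<s}" by (auto simp: P_def)
  hence "card P \<le> card ({..<s} \<times> {..<s})" by (intro card_mono) auto
  thus ?thesis by (simp add: power2_eq_square)
qed

lemma finQ: "finite (set_pmf Q)"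
  unfolding Q_def by (rule finite_set_Pi_pmf) (use fin in auto)

lemma intQ: "integrable (measure_pmf Q) (f :: _ \<Rightarrow> real)"
  by (rule integrable_measure_pmf_finite[OF finQ])

lemma intu: "integrable (measure_pmf u) (f :: _ \<Rightarrow> real)"
  by (rule integrable_measure_pmf_finite[OF fin])

lemma Eg: "p \<in> P \<Longrightarrow> measure_pmf.expectation Q (\<lambda>R. g (R (fst p)) (R (snd p))) = \<gamma>"
  unfolding Q_def \<gamma>_def by (rule M2) (use fin in \<open>auto simp: P_def\<close>)

lemma EZ: "measure_pmf.expectation Q Z = card P * \<gamma>"
proof -
  have "measure_pmf.expectation Q Z = (\<Sum>p\<in>P. measure_pmf.expectation Q (\<lambda>R. g (R (fst p)) (R (snd p))))"
    unfolding Z_def by (rule Bochner_Integration.integral_sum) (rule intQ)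
  also have "\<dots> = (\<Sum>p\<in>P. \<gamma>)" by (intro sum.cong refl Eg)
  finally show ?thesis by simp
qed

lemma gamma_nn: "0 \<le> \<gamma>" unfolding \<gamma>_def
  by (intro Bochner_Integration.integral_nonneg gnn)

lemma eta_nn: "0 \<le> \<eta>" unfolding \<eta>_def
  by (intro Bochner_Integration.integral_nonneg) auto

definition "share p q \<longleftrightarrow> fst p \<in> {fst q, snd q} \<or> snd p \<in> {fst q, snd q}"

lemma E3: assumes "a < s" "b < s" "c < s" "a \<noteq> b" "a \<noteq> c" "b \<noteq> c"
  shows "measure_pmf.expectation Q (\<lambda>R. g (R a) (R b) * g (R a) (R c)) = \<eta>"
proof -
  have "measure_pmf.expectation Q (\<lambda>R. g (R a) (R b) * g (R a) (R c)) =
    measure_pmf.expectation u (\<lambda>x. measure_pmf.expectation u (\<lambda>y. measure_pmf.expectation u (\<lambda>z. g x y * g x z)))"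
    unfolding Q_def by (rule M3) (use assms fin in auto)
  also have "\<dots> = \<eta>" unfolding \<eta>_def
    by (simp add: power2_eq_square)
  finally show ?thesis .
qed

lemma E4: assumes "a < s" "b < s" "c < s" "e < s" "a \<noteq> b" "a \<noteq> c" "b \<noteq> c" "a \<noteq> e" "b \<noteq> e" "c \<noteq> e"
  shows "measure_pmf.expectation Q (\<lambda>R. g (R a) (R b) * g (R c) (R e)) = \<gamma>^2"
proof -
  have "measure_pmf.expectation Q (\<lambda>R. g (R a) (R b) * g (R c) (R e)) =
    measure_pmf.expectation u (\<lambda>x. measure_pmf.expectation u (\<lambda>y. measure_pmf.expectation u (\<lambda>z. measure_pmf.expectation u (\<lambda>w. g x y * g z w))))"
    unfolding Q_def by (rule M4) (use assms fin in auto)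
  also have "\<dots> = \<gamma>^2" unfolding \<gamma>_def
    by (simp add: power2_eq_square)
  finally show ?thesis .
qed

lemma Epq:
  assumes "p \<in> P" "q \<in> P"
  shows "measure_pmf.expectation Q (\<lambda>R. g (R (fst p)) (R (snd p)) * g (R (fst q)) (R (snd q)))
    \<le> (if p = q then \<gamma> else 0) + (if p \<noteq> q \<and> share p q then \<eta> else 0) + \<gamma>^2"
proof -
  obtain i j k l where p: "p = (i,j)" and q: "q = (k,l)" and ij: "i < j" "j < s" and kl: "k < l" "l < s"
    using assms by (cases p, cases q) (auto simp: P_def)
  let ?E = "measure_pmf.expectation Q (\<lambda>R. g (R (fst p)) (R (snd p)) * g (R (fst q)) (R (snd q)))"
  show ?thesis
  proof (cases "p = q")
    case True
    have "?E \<le> measure_pmf.expectation Q (\<lambda>R. g (R (fst p)) (R (snd p)))"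
      using True by (intro integral_mono intQ) (auto intro: mult_left_le gle gnn)
    also have "\<dots> = \<gamma>" using assms(1) by (rule Eg)
    finally show ?thesis using True by (simp add: add_increasing2)
  next
    case False
    show ?thesis
    proof (cases "share p q")
      case sh: True
      have "?E = \<eta>"
      proof -
        consider "i = k" | "i = l" | "j = k" | "j = l"
          using sh by (auto simp: share_def p q)
        thus ?thesis
        proof cases
          case 1
          hence "j \<noteq> l" using False p q by auto
          thus ?thesis using 1 ij kl by (simp add: p q E3)
        next
          case 2
          have "?E = measure_pmf.expectation Q (\<lambda>R. g (R i) (R j) * g (R i) (R k))"
            using 2 by (simp add: p q gsym)
          also have "\<dots> = \<eta>" using 2 ij kl by (intro E3) auto
          finally show ?thesis .
        next
          case 3
          have "?E = measure_pmf.expectation Q (\<lambda>R. g (R j) (R i) * g (R j) (R l))"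
            using 3 by (simp add: p q gsym)
          also have "\<dots> = \<eta>" using 3 ij kl by (intro E3) auto
          finally show ?thesis .
        next
          case 4
          hence "i \<noteq> k" using False p q by auto
          have "?E = measure_pmf.expectation Q (\<lambda>R. g (R j) (R i) * g (R j) (R k))"
            using 4 by (simp add: p q gsym)
          also have "\<dots> = \<eta>" using 4 ij kl \<open>i \<noteq> k\<close> by (intro E3) auto
          finally show ?thesis .
        qed
      qed
      thus ?thesis using False sh gamma_nn by simp
    next
      case nsh: False
      have "?E = \<gamma>^2" using nsh ij kl unfolding p q share_def by (intro E4) auto
      thus ?thesis using False nsh by simp
    qed
  qed
qed

lemma card_share: assumes "p \<in> P" shows "card {q \<in> P. p \<noteq> q \<and> share p q} \<le> 4 * s"
proof -
  have "{q \<in> P. p \<noteq> q \<and> share p q} \<subseteq> ({fst p, snd p} \<times> {..<s}) \<union> ({..<s} \<times> {fst p, snd p})"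
    by (auto simp: P_def share_def)
  hence "card {q \<in> P. p \<noteq> q \<and> share p q} \<le> card (({fst p, snd p} \<times> {..<s}) \<union> ({..<s} \<times> {fst p, snd p}))"
    by (intro card_mono) auto
  also have "\<dots> \<le> card ({fst p, snd p} \<times> {..<s}) + card ({..<s} \<times> {fst p, snd p})"
    by (rule card_Un_le)
  also have "\<dots> \<le> 2 * s + s * 2"
    by (intro add_mono) (auto simp: card_cartesian_product card_insert_if intro!: mult_right_mono mult_left_mono)
  finally show ?thesis by simp
qed

lemma EZ2: "measure_pmf.expectation Q (\<lambda>R. (Z R)^2) \<le> card P * \<gamma> + 4 * real s ^ 3 * \<eta> + (card P)^2 * \<gamma>^2"
proof -
  have sq: "(Z R)^2 = (\<Sum>p\<in>P. \<Sum>q\<in>P. g (R (fst p)) (R (snd p)) * g (R (fst q)) (R (snd q)))" for R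
    unfolding Z_def power2_eq_square by (rule sum_product)
  have "measure_pmf.expectation Q (\<lambda>R. (Z R)^2) = (\<Sum>p\<in>P. \<Sum>q\<in>P. measure_pmf.expectation Q (\<lambda>R. g (R (fst p)) (R (snd p)) * g (R (fst q)) (R (snd q))))"
    unfolding sq
    by (subst Bochner_Integration.integral_sum[OF intQ], intro sum.cong refl, rule Bochner_Integration.integral_sum[OF intQ])
  also have "\<dots> \<le> (\<Sum>p\<in>P. \<Sum>q\<in>P. (if p = q then \<gamma> else 0) + (if p \<noteq> q \<and> share p q then \<eta> else 0) + \<gamma>^2)"
    by (intro sum_mono Epq)
  also have "\<dots> = (\<Sum>p\<in>P. \<gamma> + real (card {q \<in> P. p \<noteq> q \<and> share p q}) * \<eta> + card P * \<gamma>^2)"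
  proof (intro sum.cong refl)
    fix p assume "p \<in> P"
    have "(\<Sum>q\<in>P. (if p = q then \<gamma> else 0) + (if p \<noteq> q \<and> share p q then \<eta> else 0) + \<gamma>^2)
      = (\<Sum>q\<in>P. (if p = q then \<gamma> else 0)) + (\<Sum>q\<in>P. (if p \<noteq> q \<and> share p q then \<eta> else 0)) + (\<Sum>q\<in>P. \<gamma>^2)"
      by (simp add: sum.distrib)
    also have "(\<Sum>q\<in>P. (if p = q then \<gamma> else 0)) = \<gamma>" using \<open>p \<in> P\<close> finP by simp
    also have "(\<Sum>q\<in>P. (if p \<noteq> q \<and> share p q then \<eta> else 0)) = real (card {q \<in> P. p \<noteq> q \<and> share p q}) * \<eta>"
      using finP by (simp add: sum.If_cases) (simp add: Int_def)
    finally show "(\<Sum>q\<in>P. (if p = q then \<gamma> else 0) + (if p \<noteq> q \<and> share p q then \<eta> else 0) + \<gamma>^2) = \<gamma> + real (card {q \<in> P. p \<noteq> q \<and> share p q}) * \<eta> + card P * \<gamma>^2"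
      by simp
  qed
  also have "\<dots> \<le> (\<Sum>p\<in>P. \<gamma> + real (4 * s) * \<eta> + card P * \<gamma>^2)"
  proof (intro sum_mono add_mono mult_right_mono order.refl eta_nn)
    fix p assume "p \<in> P"
    from card_share[OF this] show "real (card {q \<in> P. p \<noteq> q \<and> share p q}) \<le> real (4 * s)"
      by (metis of_nat_le_iff)
  qed simp
  also have "\<dots> = card P * \<gamma> + card P * (4 * s) * \<eta> + (card P)^2 * \<gamma>^2"
    by (simp add: algebra_simps power2_eq_square)
  also have "\<dots> \<le> card P * \<gamma> + 4 * real s ^ 3 * \<eta> + (card P)^2 * \<gamma>^2"
  proof -
    have "real (card P) \<le> real s ^ 2" using cardP by (metis of_nat_le_iff of_nat_power)
    hence "real (card P) * (4 * s) * \<eta> \<le> real s ^ 2 * (4 * s) * \<eta>"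
      using eta_nn by (intro mult_right_mono) auto
    thus ?thesis by (simp add: power3_eq_cube power2_eq_square algebra_simps)
  qed
  finally show ?thesis .
qed

lemma Var_bound: "measure_pmf.expectation Q (\<lambda>R. (Z R - card P * \<gamma>)^2) \<le> card P * \<gamma> + 4 * real s ^ 3 * \<eta>"
proof -
  have "measure_pmf.expectation Q (\<lambda>R. (Z R - card P * \<gamma>)^2) =
    measure_pmf.expectation Q (\<lambda>R. (Z R)^2) - 2 * (card P * \<gamma>) * measure_pmf.expectation Q Z + (card P * \<gamma>)^2"
    by (simp add: power2_diff Bochner_Integration.integral_diff[OF intQ intQ] Bochner_Integration.integral_add[OF intQ intQ] measure_pmf.prob_space)
  also have "\<dots> = measure_pmf.expectation Q (\<lambda>R. (Z R)^2) - (card P * \<gamma>)^2"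
    by (simp add: EZ power2_eq_square)
  finally show ?thesis using EZ2 by (simp add: power_mult_distrib)
qed

lemma Cheb: assumes "a > 0"
  shows "measure_pmf.prob Q {R. a \<le> \<bar>Z R - card P * \<gamma>\<bar>} \<le> (card P * \<gamma> + 4 * real s ^ 3 * \<eta>) / a^2"
proof -
  have "measure_pmf.prob Q {R. a \<le> \<bar>Z R - card P * \<gamma>\<bar>} = measure_pmf.expectation Q (indicator {R. a \<le> \<bar>Z R - card P * \<gamma>\<bar>})"
    by simp
  also have "\<dots> \<le> measure_pmf.expectation Q (\<lambda>R. (Z R - card P * \<gamma>)^2 / a^2)"
  proof (intro integral_mono intQ)
    fix R
    show "indicator {R. a \<le> \<bar>Z R - card P * \<gamma>\<bar>} R \<le> (Z R - card P * \<gamma>)^2 / a^2"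
    proof (cases "a \<le> \<bar>Z R - card P * \<gamma>\<bar>")
      case True
      hence "a^2 \<le> \<bar>Z R - card P * \<gamma>\<bar>^2" using assms by (intro power_mono) auto
      thus ?thesis using True assms by (simp add: indicator_def)
    qed (auto simp: indicator_def)
  qed
  also have "\<dots> = measure_pmf.expectation Q (\<lambda>R. (Z R - card P * \<gamma>)^2) / a^2" by simp
  also have "\<dots> \<le> (card P * \<gamma> + 4 * real s ^ 3 * \<eta>) / a^2"
    using Var_bound assms by (intro divide_right_mono) auto
  finally show ?thesis .
qed

end


lemma pmf_of_set_insert_bern:
  assumes "finite S" "S \<noteq> {}" "e \<notin> S"
  shows "pmf_of_set (insert e S) =
    bernoulli_pmf (1 / real (Suc (card S))) \<bind> (\<lambda>b. if b then return_pmf e else pmf_of_set S)"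
proof (rule pmf_eqI)
  fix x
  have n: "card S > 0" using assms by (simp add: card_gt_0_iff)
  have "pmf (bernoulli_pmf (1 / real (Suc (card S))) \<bind> (\<lambda>b. if b then return_pmf e else pmf_of_set S)) x
     = indicator {e} x * (1 / real (Suc (card S))) + indicator S x / card S * (1 - 1 / real (Suc (card S)))"
    using assms by (simp add: pmf_bind pmf_of_set indicator_def)
  also have "\<dots> = indicator (insert e S) x / card (insert e S)"
    using assms n by (cases "x = e") (auto simp: indicator_def field_simps)
  also have "\<dots> = pmf (pmf_of_set (insert e S)) x" using assms by (simp add: pmf_of_set)
  finally show "pmf (pmf_of_set (insert e S)) x = pmf (bernoulli_pmf (1 / real (Suc (card S))) \<bind> (\<lambda>b. if b then return_pmf e else pmf_of_set S)) x" ..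
qed

definition detected :: "edge list \<Rightarrow> nat \<Rightarrow> edge \<Rightarrow> edge \<Rightarrow> bool" where
  "detected es t e f \<longleftrightarrow> (\<exists>k<t. es ! k = closing_edge e f \<and> e \<in> set (take k es) \<and> f \<in> set (take k es))"

definition Cset :: "nat \<Rightarrow> edge list \<Rightarrow> nat \<Rightarrow> (nat \<Rightarrow> edge) \<Rightarrow> (nat \<times> nat) set" where
  "Cset s es t R = {(i,j) \<in> wedge_pairs s R. detected es t (R i) (R j)}"

definition Qt :: "nat \<Rightarrow> edge list \<Rightarrow> nat \<Rightarrow> (nat \<Rightarrow> edge) pmf" where
  "Qt s es t = Pi_pmf {..<s} {} (\<lambda>_. pmf_of_set (set (take t es)))"

definition Bt :: "nat \<Rightarrow> nat \<Rightarrow> (nat \<Rightarrow> bool) pmf" where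
  "Bt s t = Pi_pmf {..<s} False (\<lambda>_. bernoulli_pmf (1 / real t))"

lemma set_Qt:
  assumes "R \<in> set_pmf (Qt s es t)" "1 \<le> t" "t \<le> length es"
  shows "\<And>i. i < s \<Longrightarrow> R i \<in> set (take t es)" "\<And>i. \<not> i < s \<Longrightarrow> R i = {}"
proof -
  have ne: "set (take t es) \<noteq> {}" using assms by (cases es) (auto simp: take_Suc_conv_app_nth)
  have "R \<in> PiE_dflt {..<s} {} (set_pmf \<circ> (\<lambda>_. pmf_of_set (set (take t es))))"
    using set_Pi_pmf_subset'[of "{..<s}" "{}" "\<lambda>_. pmf_of_set (set (take t es))"] assms(1)
    unfolding Qt_def by auto
  thus "\<And>i. i < s \<Longrightarrow> R i \<in> set (take t es)" "\<And>i. \<not> i < s \<Longrightarrow> R i = {}"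
    using ne by (auto simp: PiE_dflt_def)
qed

lemma set_Bt:
  assumes "msk \<in> set_pmf (Bt s t)" shows "\<And>i. \<not> i < s \<Longrightarrow> msk i = False"
proof -
  have "msk \<in> PiE_dflt {..<s} False (set_pmf \<circ> (\<lambda>_. bernoulli_pmf (1 / real t)))"
    using set_Pi_pmf_subset'[of "{..<s}" "False" "\<lambda>_. bernoulli_pmf (1 / real t)"] assms
    unfolding Bt_def by auto
  thus "\<And>i. \<not> i < s \<Longrightarrow> msk i = False" by (auto simp: PiE_dflt_def)
qed

lemma Qt_step:
  assumes "distinct es" "1 \<le> t" "t < length es"
  shows "Qt s es (Suc t) = Qt s es t \<bind> (\<lambda>R. Bt s (Suc t) \<bind> (\<lambda>msk. return_pmf (\<lambda>i. if msk i then es ! t else R i)))"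
proof -
  define S where "S = set (take t es)"
  define e where "e = es ! t"
  have dec: "es = take t es @ es ! t # drop (Suc t) es" using assms by (simp add: id_take_nth_drop)
  have S: "finite S" "S \<noteq> {}" "e \<notin> S" "card S = t"
  proof -
    show "finite S" by (simp add: S_def)
    show "S \<noteq> {}" using assms by (cases es) (auto simp: S_def)
    show "e \<notin> S" using assms(1) dec unfolding S_def e_def
      by (metis distinct_append distinct.simps(2) Int_iff empty_iff list.set_intros(1))
    show "card S = t" using assms by (simp add: S_def distinct_card)
  qed
  have ins: "set (take (Suc t) es) = insert e S" using assms by (simp add: S_def e_def take_Suc_conv_app_nth)
  define q where "q = (\<lambda>b. if b then return_pmf e else pmf_of_set S)"
  have "Qt s es (Suc t) = Pi_pmf {..<s} {} (\<lambda>_. bernoulli_pmf (1 / real (Suc t)) \<bind> q)"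
    unfolding Qt_def ins q_def using S by (subst pmf_of_set_insert_bern) auto
  also have "\<dots> = Bt s (Suc t) \<bind> (\<lambda>msk. Pi_pmf {..<s} {} (\<lambda>i. q (msk i)))"
    unfolding Bt_def by (rule Pi_pmf_bind) auto
  also have "\<dots> = Bt s (Suc t) \<bind> (\<lambda>msk. Pi_pmf {..<s} {} (\<lambda>i. pmf_of_set S \<bind> (\<lambda>r. return_pmf (if msk i then e else r))))"
    by (intro bind_pmf_cong refl Pi_pmf_cong) (auto simp: q_def bind_return_pmf')
  also have "\<dots> = Bt s (Suc t) \<bind> (\<lambda>msk. Qt s es t \<bind> (\<lambda>R. return_pmf (\<lambda>i. if i \<in> {..<s} then (if msk i then e else R i) else {})))"
    unfolding Qt_def S_def[symmetric]
    by (intro bind_pmf_cong refl, subst Pi_pmf_bind[where d'="{}"]) auto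
  also have "\<dots> = Bt s (Suc t) \<bind> (\<lambda>msk. Qt s es t \<bind> (\<lambda>R. return_pmf (\<lambda>i. if msk i then e else R i)))"
  proof (intro bind_pmf_cong refl)
    fix msk R assume m: "msk \<in> set_pmf (Bt s (Suc t))" and R: "R \<in> set_pmf (Qt s es t)"
    show "return_pmf (\<lambda>i. if i \<in> {..<s} then (if msk i then e else R i) else {}) = return_pmf (\<lambda>i. if msk i then e else R i)"
    proof (intro arg_cong[where f=return_pmf] ext)
      fix i show "(if i \<in> {..<s} then (if msk i then e else R i) else {}) = (if msk i then e else R i)"
        using set_Bt[OF m, of i] set_Qt(2)[OF R assms(2) less_imp_le[OF assms(3)], of i] by (cases "i < s") simp_all
    qed
  qed
  also have "\<dots> = Qt s es t \<bind> (\<lambda>R. Bt s (Suc t) \<bind> (\<lambda>msk. return_pmf (\<lambda>i. if msk i then e else R i)))"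
    by (rule bind_commute_pmf)
  finally show ?thesis unfolding e_def .
qed

lemma closing_ne:
  assumes "is_edge e" "is_edge f" "is_wedge e f"
  shows "closing_edge e f \<noteq> e" "closing_edge e f \<noteq> f"
proof -
  have ce: "card e = 2" "card f = 2" "card (e \<inter> f) = 1" using assms by (auto simp: is_edge_def is_wedge_def)
  have fe: "f - e \<noteq> {}"
  proof
    assume "f - e = {}" hence "f \<inter> e = f" by auto
    thus False using ce by (simp add: Int_commute)
  qed
  have ef: "e - f \<noteq> {}"
  proof
    assume "e - f = {}" hence "e \<inter> f = e" by auto
    thus False using ce by simp
  qed
  show "closing_edge e f \<noteq> e" using fe unfolding closing_edge_def by blast
  show "closing_edge e f \<noteq> f" using ef unfolding closing_edge_def by blast
qed

lemma Cset_step: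
  fixes msk :: "nat \<Rightarrow> bool" and R :: "nat \<Rightarrow> edge"
  assumes dist: "distinct es" and t: "t < length es" and edges: "\<forall>e\<in>set es. is_edge e"
    and R1: "\<And>i. i < s \<Longrightarrow> R i \<in> set (take t es)"
  defines "e \<equiv> es ! t"
  defines "R' \<equiv> (\<lambda>i. if msk i then e else R i)"
  shows "{(i, j) \<in> Cset s es t R \<inter> wedge_pairs s R'. \<not> msk i \<and> \<not> msk j} \<union>
         {(i, j) \<in> wedge_pairs s R'. e = closing_edge (R' i) (R' j)} = Cset s es (Suc t) R'"
proof -
  have dec: "es = take t es @ es ! t # drop (Suc t) es" using t by (simp add: id_take_nth_drop)
  have enotin: "e \<notin> set (take t es)" using dist dec unfolding e_def
    by (metis distinct_append distinct.simps(2) Int_iff empty_iff list.set_intros(1))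
  have ein: "e \<in> set es" using t by (simp add: e_def)
  have R'edge: "is_edge (R' i)" if "i < s" for i
    using R1[OF that] ein edges unfolding R'_def by (auto dest: in_set_takeD)
  have sub: "set (take k es) \<subseteq> set (take t es)" if "k \<le> t" for k
    using that by (rule set_take_subset_set_take)
  show ?thesis
  proof (intro equalityI subsetI)
    fix p assume p: "p \<in> {(i, j) \<in> Cset s es t R \<inter> wedge_pairs s R'. \<not> msk i \<and> \<not> msk j} \<union>
         {(i, j) \<in> wedge_pairs s R'. e = closing_edge (R' i) (R' j)}"
    obtain i j where pij: "p = (i,j)" by (cases p)
    show "p \<in> Cset s es (Suc t) R'"
    proof (cases "(i,j) \<in> {(i, j) \<in> Cset s es t R \<inter> wedge_pairs s R'. \<not> msk i \<and> \<not> msk j}")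
      case True
      hence "detected es t (R i) (R j)" "\<not> msk i" "\<not> msk j" "(i,j) \<in> wedge_pairs s R'" by (auto simp: Cset_def)
      hence "detected es (Suc t) (R' i) (R' j)" unfolding R'_def detected_def by auto (meson less_SucI)
      thus ?thesis using True pij by (auto simp: Cset_def)
    next
      case False
      hence W: "(i,j) \<in> wedge_pairs s R'" and c: "e = closing_edge (R' i) (R' j)" using p pij by auto
      have ij: "i < s" "j < s" "is_wedge (R' i) (R' j)" using W by (auto simp: wedge_pairs_def)
      have ni: "\<not> msk i"
      proof
        assume "msk i" hence "R' i = e" by (simp add: R'_def)
        thus False using closing_ne(1)[OF R'edge[OF ij(1)] R'edge[OF ij(2)] ij(3)] c by simp
      qed
      have nj: "\<not> msk j"
      proof
        assume "msk j" hence "R' j = e" by (simp add: R'_def)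
        thus False using closing_ne(2)[OF R'edge[OF ij(1)] R'edge[OF ij(2)] ij(3)] c by simp
      qed
      have "detected es (Suc t) (R' i) (R' j)" unfolding detected_def
        using ni nj R1 ij c by (intro exI[of _ t]) (auto simp: R'_def e_def)
      thus ?thesis using W pij by (auto simp: Cset_def)
    qed
  next
    fix p assume p: "p \<in> Cset s es (Suc t) R'"
    obtain i j where pij: "p = (i,j)" by (cases p)
    have W: "(i,j) \<in> wedge_pairs s R'" and d: "detected es (Suc t) (R' i) (R' j)"
      using p pij by (auto simp: Cset_def)
    then obtain k where k: "k < Suc t" "es ! k = closing_edge (R' i) (R' j)"
      "R' i \<in> set (take k es)" "R' j \<in> set (take k es)" by (auto simp: detected_def)
    show "p \<in> {(i, j) \<in> Cset s es t R \<inter> wedge_pairs s R'. \<not> msk i \<and> \<not> msk j} \<union>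
         {(i, j) \<in> wedge_pairs s R'. e = closing_edge (R' i) (R' j)}"
    proof (cases "k = t")
      case True thus ?thesis using W k pij by (auto simp: e_def)
    next
      case False
      hence kt: "k < t" using k by simp
      have "R' i \<in> set (take t es)" "R' j \<in> set (take t es)" using k sub[of k] kt by auto
      hence ni: "\<not> msk i" "\<not> msk j" using enotin by (auto simp: R'_def)
      have "detected es t (R i) (R j)" using k kt ni unfolding detected_def R'_def by auto
      moreover have "(i,j) \<in> wedge_pairs s R" using W ni by (simp add: wedge_pairs_def R'_def)
      ultimately show ?thesis using W ni pij by (auto simp: Cset_def)
    qed
  qed
qed

lemma bern1: "bernoulli_pmf 1 = return_pmf True"
  by (rule pmf_eqI) (auto simp: indicator_def)

lemma state_base:
  assumes "es \<noteq> []"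
  shows "sb_state s es 1 = map_pmf (\<lambda>R. (R, Cset s es 1 R)) (Qt s es 1)"
proof -
  define R1 where "R1 = (\<lambda>i. if i < s then es ! 0 else {})"
  have wp: "wedge_pairs s R1 = {}" by (auto simp: wedge_pairs_def R1_def is_wedge_def)
  have B: "Pi_pmf {..<s} False (\<lambda>_. bernoulli_pmf (1 / real 1)) = return_pmf (\<lambda>i. i \<in> {..<s})"
    by (simp add: bern1)
  have "sb_state s es 1 = sb_step s 1 (es ! 0) (\<lambda>_. {}, {})"
    by (simp add: bind_return_pmf)
  also have "\<dots> = return_pmf (R1, {})"
    unfolding sb_step_def B by (simp add: Let_def wp[unfolded R1_def] R1_def)
  also have "\<dots> = map_pmf (\<lambda>R. (R, Cset s es 1 R)) (Qt s es 1)"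
  proof -
    have "set (take 1 es) = {es ! 0}" using assms by (cases es) auto
    hence "Qt s es 1 = return_pmf R1" by (simp add: Qt_def pmf_of_set_singleton R1_def)
    thus ?thesis by (simp add: Cset_def wp)
  qed
  finally show ?thesis .
qed

lemma state_char:
  assumes dist: "distinct es" and edges: "\<forall>e\<in>set es. is_edge e" and t: "1 \<le> t" "t \<le> length es"
  shows "sb_state s es t = map_pmf (\<lambda>R. (R, Cset s es t R)) (Qt s es t)"
  using t
proof (induction t rule: dec_induct)
  case base thus ?case using assms by (intro state_base) auto
next
  case (step t)
  have tl: "t < length es" using step by simp
  let ?e = "es ! t"
  have "sb_state s es (Suc t) = Qt s es t \<bind> (\<lambda>R. sb_step s (Suc t) ?e (R, Cset s es t R))"
    using step.IH tl by (simp add: bind_map_pmf)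
  also have "\<dots> = Qt s es t \<bind> (\<lambda>R. Bt s (Suc t) \<bind> (\<lambda>msk. return_pmf
      ((\<lambda>i. if msk i then ?e else R i), Cset s es (Suc t) (\<lambda>i. if msk i then ?e else R i))))"
  proof (intro bind_pmf_cong refl)
    fix R assume R: "R \<in> set_pmf (Qt s es t)"
    show "sb_step s (Suc t) ?e (R, Cset s es t R) = Bt s (Suc t) \<bind> (\<lambda>msk. return_pmf
      ((\<lambda>i. if msk i then ?e else R i), Cset s es (Suc t) (\<lambda>i. if msk i then ?e else R i)))"
      unfolding sb_step_def Bt_def[symmetric] map_pmf_def Let_def fst_conv snd_conv
      using Cset_step[OF dist tl edges set_Qt(1)[OF R step.hyps(1) less_imp_le[OF tl]]]
      by (intro bind_pmf_cong refl) simp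
  qed
  also have "\<dots> = map_pmf (\<lambda>R. (R, Cset s es (Suc t) R)) (Qt s es (Suc t))"
    unfolding Qt_step[OF dist step.hyps(1) tl] by (simp add: map_bind_pmf)
  finally show ?case .
qed


lemma T3facts:
  assumes "a \<noteq> b" "b \<noteq> c" "a \<noteq> c"
    "e \<in> {{b,c},{a,c},{a,b}}" "f \<in> {{b,c},{a,c},{a,b}}" "e \<noteq> f"
  shows "is_wedge e f \<and> e \<union> f = {a,b,c} \<and> closing_edge e f \<in> {{b,c},{a,c},{a,b}}
     \<and> closing_edge e f \<noteq> e \<and> closing_edge e f \<noteq> f"
  using assms by (auto simp: is_wedge_def closing_edge_def insert_commute)

lemma two_subset3:
  assumes "e \<subseteq> {a,b,c}" "card e = 2"
  shows "e \<in> {{b,c},{a,c},{a,b}}"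
  using assms by (auto simp: card_2_iff insert_commute)


definition pos :: "edge list \<Rightarrow> edge \<Rightarrow> nat" where
  "pos es x = the_inv_into {..<length es} (\<lambda>i. es ! i) x"

lemma pos_props:
  assumes "distinct es" "x \<in> set es"
  shows "pos es x < length es" "es ! pos es x = x"
proof -
  have inj: "inj_on (\<lambda>i. es ! i) {..<length es}" using assms(1) by (auto simp: inj_on_def nth_eq_iff_index_eq)
  have img: "(\<lambda>i. es ! i) ` {..<length es} = set es" by (auto simp: in_set_conv_nth)
  show "pos es x < length es" "es ! pos es x = x"
    unfolding pos_def using the_inv_into_into[OF inj, of x] f_the_inv_into_f[OF inj, of x] assms img by auto
qed

lemma pos_nth: assumes "distinct es" "k < length es" shows "pos es (es ! k) = k"
proof -
  have inj: "inj_on (\<lambda>i. es ! i) {..<length es}" using assms(1) by (auto simp: inj_on_def nth_eq_iff_index_eq)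
  show ?thesis unfolding pos_def using the_inv_into_f_f[OF inj] assms by auto
qed

lemma pos_inj: assumes "distinct es" "x \<in> set es" "y \<in> set es" "pos es x = pos es y" shows "x = y"
  using pos_props[OF assms(1,2)] pos_props[OF assms(1,3)] assms(4) by metis

lemma in_take_pos: assumes "distinct es" "k \<le> length es"
  shows "x \<in> set (take k es) \<longleftrightarrow> x \<in> set es \<and> pos es x < k"
proof
  assume "x \<in> set (take k es)"
  then obtain i where i: "i < length (take k es)" "take k es ! i = x" by (auto simp: in_set_conv_nth)
  hence "i < k" "i < length es" "es ! i = x" by auto
  thus "x \<in> set es \<and> pos es x < k" using pos_nth[OF assms(1), of i] by auto
next
  assume "x \<in> set es \<and> pos es x < k"
  thus "x \<in> set (take k es)" using pos_props[OF assms(1), of x] assms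
    by (metis in_set_conv_nth length_take min.absorb2 nth_take)
qed

lemma detected_iff:
  assumes "distinct es" "e \<in> set es" "f \<in> set es"
  shows "detected es (length es) e f \<longleftrightarrow>
    closing_edge e f \<in> set es \<and> pos es e < pos es (closing_edge e f) \<and> pos es f < pos es (closing_edge e f)"
proof
  assume "detected es (length es) e f"
  then obtain k where k: "k < length es" "es ! k = closing_edge e f" "e \<in> set (take k es)" "f \<in> set (take k es)"
    by (auto simp: detected_def)
  thus "closing_edge e f \<in> set es \<and> pos es e < pos es (closing_edge e f) \<and> pos es f < pos es (closing_edge e f)"
    using in_take_pos[OF assms(1), of k] pos_nth[OF assms(1) k(1)] by (metis less_imp_le nth_mem)
next
  assume a: "closing_edge e f \<in> set es \<and> pos es e < pos es (closing_edge e f) \<and> pos es f < pos es (closing_edge e f)"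
  show "detected es (length es) e f" unfolding detected_def
    using a pos_props[OF assms(1), of "closing_edge e f"] in_take_pos[OF assms(1), of "pos es (closing_edge e f)"] assms
    by (intro exI[of _ "pos es (closing_edge e f)"]) auto
qed

definition Wset :: "edge set \<Rightarrow> edge set set" where
  "Wset E = {{e, f} | e f. e \<in> E \<and> f \<in> E \<and> is_wedge e f}"

definition Oset :: "edge set \<Rightarrow> (edge \<times> edge) set" where
  "Oset E = {(e, f). e \<in> E \<and> f \<in> E \<and> is_wedge e f}"

lemma is_wedge_sym: "is_wedge e f \<longleftrightarrow> is_wedge f e"
  by (auto simp: is_wedge_def Int_commute)

lemma card_Oset: assumes "finite E" shows "card (Oset E) = 2 * num_wedges E"
proof -
  have finW: "finite (Wset E)"
  proof -
    have "Wset E \<subseteq> Pow E" by (auto simp: Wset_def)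
    thus ?thesis using assms finite_subset by blast
  qed
  have finO: "finite (Oset E)"
  proof -
    have "Oset E \<subseteq> E \<times> E" by (auto simp: Oset_def)
    thus ?thesis using assms finite_subset by blast
  qed
  have eq: "Oset E = (\<Union>w\<in>Wset E. {p \<in> Oset E. {fst p, snd p} = w})"
    by (auto simp: Oset_def Wset_def) blast
  have "card (Oset E) = card (\<Union>w\<in>Wset E. {p \<in> Oset E. {fst p, snd p} = w})"
    by (rule arg_cong[OF eq])
  also have "\<dots> = (\<Sum>w\<in>Wset E. card {p \<in> Oset E. {fst p, snd p} = w})"
  proof (rule card_UN_disjoint[OF finW])
    show "\<forall>w\<in>Wset E. finite {p \<in> Oset E. {fst p, snd p} = w}" using finO by auto
    show "\<forall>w\<in>Wset E. \<forall>w'\<in>Wset E. w \<noteq> w' \<longrightarrow> {p \<in> Oset E. {fst p, snd p} = w} \<inter> {p \<in> Oset E. {fst p, snd p} = w'} = {}"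
      by blast
  qed
  also have "\<dots> = (\<Sum>w\<in>Wset E. 2)"
  proof (intro sum.cong refl)
    fix w assume "w \<in> Wset E"
    then obtain e f where w: "w = {e,f}" "e \<in> E" "f \<in> E" "is_wedge e f" by (auto simp: Wset_def)
    have ef: "e \<noteq> f" using w by (simp add: is_wedge_def)
    have "{p \<in> Oset E. {fst p, snd p} = w} = {(e,f),(f,e)}"
      using w ef by (auto simp: Oset_def doubleton_eq_iff is_wedge_sym)
    thus "card {p \<in> Oset E. {fst p, snd p} = w} = 2" using ef by simp
  qed
  finally show ?thesis by (simp add: num_wedges_def Wset_def)
qed


lemma three_elems:
  assumes "finite T" "card T = 3" "e \<in> T" "f \<in> T" "g \<in> T" "e \<noteq> f" "e \<noteq> g" "f \<noteq> g"
  shows "T = {e,f,g}"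
proof -
  have "{e,f,g} \<subseteq> T" "card {e,f,g} = 3" using assms by auto
  thus ?thesis using card_subset_eq[OF assms(1)] assms(2) by metis
qed

definition Dset :: "edge list \<Rightarrow> (edge \<times> edge) set" where
  "Dset es = {(e, f). e \<in> set es \<and> f \<in> set es \<and> is_wedge e f \<and> detected es (length es) e f}"

definition Tri :: "edge set \<Rightarrow> nat set set" where
  "Tri E = {X :: nat set. card X = 3 \<and> (\<forall>x\<in>X. \<forall>y\<in>X. x \<noteq> y \<longrightarrow> {x, y} \<in> E)}"

lemma wedge_union_tri:
  assumes "is_edge e" "is_edge f" "is_wedge e f" "e \<in> E" "f \<in> E" "closing_edge e f \<in> E"
  shows "e \<union> f \<in> Tri E"
proof -
  have c: "card e = 2" "card f = 2" "card (e \<inter> f) = 1" "e \<noteq> f" using assms by (auto simp: is_edge_def is_wedge_def)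
  then obtain u where u: "e \<inter> f = {u}" by (auto simp: card_1_singleton_iff)
  obtain x y where e: "e = {x,y}" "x \<noteq> y" using c by (auto simp: card_2_iff)
  obtain x' y' where f: "f = {x',y'}" "x' \<noteq> y'" using c by (auto simp: card_2_iff)
  have "\<exists>a. e = {u,a} \<and> a \<noteq> u" using u e by (auto simp: doubleton_eq_iff)
  then obtain a where a: "e = {u,a}" "a \<noteq> u" by blast
  have "\<exists>b. f = {u,b} \<and> b \<noteq> u" using u f by (auto simp: doubleton_eq_iff)
  then obtain b where b: "f = {u,b}" "b \<noteq> u" by blast
  have ab: "a \<noteq> b" using a b c by auto
  have cl: "closing_edge e f = {a,b}" using a b ab unfolding closing_edge_def by auto
  have X: "e \<union> f = {u,a,b}" using a b by auto
  have p: "{u,a} \<in> E" "{a,u} \<in> E" "{u,b} \<in> E" "{b,u} \<in> E" "{a,b} \<in> E" "{b,a} \<in> E"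
    using a b assms(4,5,6) cl by (simp_all add: insert_commute)
  have "card {u,a,b} = 3" using a b ab by simp
  moreover have "\<forall>x\<in>{u,a,b}. \<forall>y\<in>{u,a,b}. x \<noteq> y \<longrightarrow> {x, y} \<in> E"
    using p by blast
  ultimately show ?thesis unfolding Tri_def X by blast
qed

lemma card_Dset:
  assumes dist: "distinct es" and edges: "\<forall>e\<in>set es. is_edge e"
  shows "card (Dset es) = 2 * num_triangles (set es)"
proof -
  let ?E = "set es"
  have finT: "finite (Tri ?E)"
  proof -
    have sub: "X \<subseteq> \<Union>?E" if X: "X \<in> Tri ?E" for X
    proof
      fix x assume x: "x \<in> X"
      from X obtain a b c where abc: "X = {a,b,c}" "a \<noteq> b" "b \<noteq> c" "a \<noteq> c"
        by (auto simp: Tri_def card_3_iff)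
      obtain y where y: "y \<in> X" "y \<noteq> x" using x abc by blast
      hence "{x,y} \<in> ?E" using X x by (auto simp: Tri_def)
      thus "x \<in> \<Union>?E" by blast
    qed
    have fe: "finite e" if "e \<in> ?E" for e using edges that by (auto simp: is_edge_def intro: card_ge_0_finite)
    have "finite (\<Union>?E)" using fe by blast
    hence "finite (Pow (\<Union>?E))" by simp
    moreover have "Tri ?E \<subseteq> Pow (\<Union>?E)" using sub by blast
    ultimately show ?thesis using finite_subset by blast
  qed
  have finD: "finite (Dset es)"
  proof -
    have "Dset es \<subseteq> ?E \<times> ?E" by (auto simp: Dset_def)
    thus ?thesis using finite_subset by blast
  qed
  have eq: "Dset es = (\<Union>X\<in>Tri ?E. {p \<in> Dset es. fst p \<union> snd p = X})"
  proof (intro equalityI subsetI)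
    fix p assume p: "p \<in> Dset es"
    obtain e f where ef: "p = (e,f)" by (cases p)
    have "closing_edge e f \<in> ?E" using p ef detected_iff[OF dist] by (auto simp: Dset_def)
    hence "e \<union> f \<in> Tri ?E" using p ef edges by (intro wedge_union_tri) (auto simp: Dset_def)
    thus "p \<in> (\<Union>X\<in>Tri ?E. {p \<in> Dset es. fst p \<union> snd p = X})" using p ef by auto
  qed auto
  have "card (Dset es) = card (\<Union>X\<in>Tri ?E. {p \<in> Dset es. fst p \<union> snd p = X})"
    by (rule arg_cong[OF eq])
  also have "\<dots> = (\<Sum>X\<in>Tri ?E. card {p \<in> Dset es. fst p \<union> snd p = X})"
  proof (rule card_UN_disjoint[OF finT])
    show "\<forall>w\<in>Tri ?E. finite {p \<in> Dset es. fst p \<union> snd p = w}" using finD by auto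
    show "\<forall>w\<in>Tri ?E. \<forall>w'\<in>Tri ?E. w \<noteq> w' \<longrightarrow> {p \<in> Dset es. fst p \<union> snd p = w} \<inter> {p \<in> Dset es. fst p \<union> snd p = w'} = {}"
      by blast
  qed
  also have "\<dots> = (\<Sum>X\<in>Tri ?E. 2)"
  proof (intro sum.cong refl)
    fix X assume X: "X \<in> Tri ?E"
    then obtain a b c where abc: "X = {a,b,c}" "a \<noteq> b" "b \<noteq> c" "a \<noteq> c"
      by (auto simp: Tri_def card_3_iff)
    define T3 where "T3 = {{b,c},{a,c},{a,b}}"
    have T3E: "T3 \<subseteq> ?E" using X abc unfolding T3_def Tri_def by auto
    have finT3: "finite T3" "T3 \<noteq> {}" by (auto simp: T3_def)
    have cT3: "card T3 = 3" using abc by (simp add: T3_def doubleton_eq_iff)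
    define M where "M = Max (pos es ` T3)"
    have "M \<in> pos es ` T3" using finT3 by (simp add: M_def)
    then obtain z where z1: "z \<in> T3" "pos es z = M" by auto
    have z2: "pos es y \<le> pos es z" if "y \<in> T3" for y using finT3 that z1 by (simp add: M_def)
    note z = z1(1) z2
    have fib: "{p \<in> Dset es. fst p \<union> snd p = X} = {(e,f). e \<in> T3 \<and> f \<in> T3 \<and> e \<noteq> f \<and> closing_edge e f = z}"
    proof (intro equalityI subsetI)
      fix p assume p: "p \<in> {p \<in> Dset es. fst p \<union> snd p = X}"
      obtain e f where ef: "p = (e,f)" by (cases p)
      have eE: "e \<in> ?E" "f \<in> ?E" "is_wedge e f" "detected es (length es) e f" "e \<union> f = X"
        using p ef by (auto simp: Dset_def)
      have sube: "e \<subseteq> {a,b,c}" "f \<subseteq> {a,b,c}" using eE(5) abc(1) by blast+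
      have ce: "card e = 2" "card f = 2" using edges eE(1,2) by (auto simp: is_edge_def)
      have "e \<in> T3" unfolding T3_def using sube(1) ce(1) by (rule two_subset3)
      have "f \<in> T3" unfolding T3_def using sube(2) ce(2) by (rule two_subset3)
      moreover have "e \<noteq> f" using eE by (auto simp: is_wedge_def)
      moreover have "closing_edge e f = z"
      proof (rule ccontr)
        let ?g = "closing_edge e f"
        assume nz: "?g \<noteq> z"
        have tf: "?g \<in> T3" "?g \<noteq> e" "?g \<noteq> f"
          using T3facts[OF abc(2-4), of e f] \<open>e \<in> T3\<close> \<open>f \<in> T3\<close> \<open>e \<noteq> f\<close> unfolding T3_def by auto
        have "T3 = {e,f,?g}" using three_elems[OF finT3(1) cT3 \<open>e \<in> T3\<close> \<open>f \<in> T3\<close> tf(1)] \<open>e \<noteq> f\<close> tf by metis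
        hence "z = e \<or> z = f" using z(1) nz by blast
        moreover have "pos es e < pos es ?g" "pos es f < pos es ?g" using detected_iff[OF dist eE(1,2)] eE(4) by auto
        moreover have "pos es ?g \<le> pos es z" using z(2) tf by auto
        ultimately show False by auto
      qed
      ultimately show "p \<in> {(e,f). e \<in> T3 \<and> f \<in> T3 \<and> e \<noteq> f \<and> closing_edge e f = z}" using ef \<open>e \<in> T3\<close> by auto
    next
      fix p assume p: "p \<in> {(e,f). e \<in> T3 \<and> f \<in> T3 \<and> e \<noteq> f \<and> closing_edge e f = z}"
      obtain e f where ef: "p = (e,f)" by (cases p)
      have h: "e \<in> T3" "f \<in> T3" "e \<noteq> f" "closing_edge e f = z" using p ef by auto
      have tf: "is_wedge e f" "e \<union> f = X" "z \<noteq> e" "z \<noteq> f"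
        using T3facts[OF abc(2-4), of e f] h abc unfolding T3_def by auto
      have "pos es e \<noteq> pos es z" "pos es f \<noteq> pos es z"
        using tf T3E h z(1) pos_inj[OF dist] by blast+
      hence "pos es e < pos es z" "pos es f < pos es z" using z(2) h by (auto simp: le_less)
      hence "detected es (length es) e f" using detected_iff[OF dist] T3E h z(1) by auto
      thus "p \<in> {p \<in> Dset es. fst p \<union> snd p = X}" using ef tf T3E h by (auto simp: Dset_def)
    qed
    have "T3 - {z} \<noteq> {}" "card (T3 - {z}) = 2"
      using z(1) abc unfolding T3_def by (auto simp: doubleton_eq_iff card_insert_if)
    then obtain x y where xy: "T3 - {z} = {x,y}" "x \<noteq> y" by (auto simp: card_2_iff)
    have "{(e,f). e \<in> T3 \<and> f \<in> T3 \<and> e \<noteq> f \<and> closing_edge e f = z} = {(x,y),(y,x)}"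
    proof (intro equalityI subsetI)
      fix p assume p: "p \<in> {(e,f). e \<in> T3 \<and> f \<in> T3 \<and> e \<noteq> f \<and> closing_edge e f = z}"
      obtain e f where ef: "p = (e,f)" by (cases p)
      have h: "e \<in> T3" "f \<in> T3" "e \<noteq> f" "closing_edge e f = z" using p ef by auto
      have "z \<noteq> e" "z \<noteq> f" using T3facts[OF abc(2-4), of e f] h abc unfolding T3_def by auto
      hence "e \<in> {x,y}" "f \<in> {x,y}" using h xy by blast+
      thus "p \<in> {(x,y),(y,x)}" using ef h by auto
    next
      have xyT: "x \<in> T3" "y \<in> T3" "x \<noteq> z" "y \<noteq> z" using xy by blast+
      have c1: "closing_edge x y = z"
      proof -
        have "closing_edge x y \<in> T3" "closing_edge x y \<noteq> x" "closing_edge x y \<noteq> y"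
          using T3facts[OF abc(2-4), of x y] xyT xy(2) unfolding T3_def by auto
        thus ?thesis using xy by blast
      qed
      have c2: "closing_edge y x = z" using c1 by (simp add: closing_edge_def Un_commute Int_commute)
      fix p assume "p \<in> {(x,y),(y,x)}"
      thus "p \<in> {(e,f). e \<in> T3 \<and> f \<in> T3 \<and> e \<noteq> f \<and> closing_edge e f = z}"
        using xyT xy(2) c1 c2 by auto
    qed
    thus "card {p \<in> Dset es. fst p \<union> snd p = X} = 2" using fib xy(2) by simp
  qed
  finally show ?thesis by (simp add: num_triangles_def Tri_def)
qed


lemma edge_pair_wedge:
  assumes "is_edge f" "is_edge f'" "f \<noteq> f'" "u \<in> f" "u \<in> f'"
  shows "is_wedge f f'"
proof -
  have c: "card f = 2" "card f' = 2" using assms by (auto simp: is_edge_def)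
  have fin: "finite f" "finite f'" using c by (auto intro: card_ge_0_finite)
  have ne: "f \<inter> f' \<noteq> {}" using assms by auto
  have le: "card (f \<inter> f') \<le> 2" using card_mono[OF fin(1), of "f \<inter> f'"] c by auto
  have n2: "card (f \<inter> f') \<noteq> 2"
  proof
    assume h: "card (f \<inter> f') = 2"
    have "f \<inter> f' = f" using card_subset_eq[OF fin(1), of "f \<inter> f'"] h c by auto
    moreover have "f \<inter> f' = f'" using card_subset_eq[OF fin(2), of "f \<inter> f'"] h c by auto
    ultimately show False using assms(3) by simp
  qed
  have "card (f \<inter> f') \<noteq> 0" using ne fin by auto
  hence "card (f \<inter> f') = 1" using le n2 by linarith
  thus ?thesis using assms(3) by (simp add: is_wedge_def)
qed

lemma finite_Wset: "finite E \<Longrightarrow> finite (Wset E)"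
proof -
  assume "finite E"
  moreover have "Wset E \<subseteq> Pow E" by (auto simp: Wset_def)
  ultimately show ?thesis using finite_subset by blast
qed

lemma star_bound:
  assumes fin: "finite E" and edges: "\<forall>e\<in>E. is_edge e"
  shows "card {f\<in>E. u \<in> f} * (card {f\<in>E. u \<in> f} - 1) \<le> 2 * num_wedges E + 1"
proof -
  let ?A = "{f\<in>E. u \<in> f}"
  have sub: "{B. B \<subseteq> ?A \<and> card B = 2} \<subseteq> Wset E"
  proof
    fix B assume "B \<in> {B. B \<subseteq> ?A \<and> card B = 2}"
    then obtain f f' where B: "B = {f,f'}" "f \<noteq> f'" "f \<in> ?A" "f' \<in> ?A" by (auto simp: card_2_iff)
    hence "is_wedge f f'" using edges by (intro edge_pair_wedge) auto
    thus "B \<in> Wset E" using B unfolding Wset_def by blast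
  qed
  have "card ?A choose 2 = card {B. B \<subseteq> ?A \<and> card B = 2}"
    using fin by (simp add: n_subsets)
  also have "\<dots> \<le> card (Wset E)" using sub finite_Wset[OF fin] by (rule card_mono[rotated])
  also have "\<dots> = num_wedges E" by (simp add: num_wedges_def Wset_def)
  finally have "card ?A * (card ?A - 1) div 2 \<le> num_wedges E" by (simp add: choose_two)
  thus ?thesis by linarith
qed

lemma wedge_deg_bound:
  assumes fin: "finite E" and edges: "\<forall>e\<in>E. is_edge e" and eE: "e \<in> E" and W1: "num_wedges E \<ge> 1"
  shows "real (card {f\<in>E. is_wedge e f}) \<le> 5 * sqrt (real (num_wedges E))"
proof -
  obtain u v where e: "e = {u,v}" "u \<noteq> v" using edges eE by (auto simp: is_edge_def card_2_iff)
  let ?W = "real (num_wedges E)"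
  have sq: "real (card {f\<in>E. x \<in> f}) ^ 2 \<le> 6 * ?W" for x
  proof -
    define a where "a = card {f\<in>E. x \<in> f}"
    have h: "a * (a - 1) \<le> 2 * num_wedges E + 1" unfolding a_def by (rule star_bound[OF fin edges])
    show ?thesis
    proof (cases "a \<le> 1")
      case True
      hence "real a ^ 2 \<le> 1" by (cases a) auto
      thus ?thesis using W1 unfolding a_def by simp
    next
      case False
      have "real (a * (a - 1)) \<le> real (2 * num_wedges E + 1)" using h by (simp only: of_nat_le_iff)
      moreover have "real (a * (a - 1)) = real a * real a - real a" using False by (simp add: of_nat_diff algebra_simps)
      ultimately have h1: "real a * real a - real a \<le> 2 * ?W + 1" by simp
      have ge2: "real a \<ge> 2" using False by simp
      have "0 \<le> real a * (real a - 2)" using ge2 by simp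
      hence h2: "0 \<le> real a * real a - 2 * real a" by (simp add: algebra_simps)
      have "real a ^ 2 \<le> 4 * ?W + 2" using h1 h2 by (simp add: power2_eq_square)
      thus ?thesis using W1 unfolding a_def by simp
    qed
  qed
  have sub: "{f\<in>E. is_wedge e f} \<subseteq> {f\<in>E. u \<in> f} \<union> {f\<in>E. v \<in> f}"
  proof
    fix f assume f: "f \<in> {f\<in>E. is_wedge e f}"
    hence "card (e \<inter> f) = 1" by (simp add: is_wedge_def)
    hence "e \<inter> f \<noteq> {}" by auto
    thus "f \<in> {f\<in>E. u \<in> f} \<union> {f\<in>E. v \<in> f}" using f e by auto
  qed
  have "card {f\<in>E. is_wedge e f} \<le> card ({f\<in>E. u \<in> f} \<union> {f\<in>E. v \<in> f})"
    using fin by (intro card_mono[OF _ sub]) auto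
  also have "\<dots> \<le> card {f\<in>E. u \<in> f} + card {f\<in>E. v \<in> f}" by (rule card_Un_le)
  finally have le0: "card {f\<in>E. is_wedge e f} \<le> card {f\<in>E. u \<in> f} + card {f\<in>E. v \<in> f}" .
  have le: "real (card {f\<in>E. is_wedge e f}) \<le> real (card {f\<in>E. u \<in> f}) + real (card {f\<in>E. v \<in> f})"
    using of_nat_mono[OF le0] by simp
  have s1: "real (card {f\<in>E. u \<in> f}) \<le> sqrt (6 * ?W)" "real (card {f\<in>E. v \<in> f}) \<le> sqrt (6 * ?W)"
    using sq[of u] sq[of v] by (auto intro: real_le_rsqrt)
  have s2: "sqrt (6 * ?W) = sqrt 6 * sqrt ?W" by (simp add: real_sqrt_mult)
  have "sqrt 6 \<le> 5/2" by (rule real_le_lsqrt) (auto simp: power2_eq_square)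
  hence s3: "sqrt 6 * sqrt ?W \<le> 5/2 * sqrt ?W" by (rule mult_right_mono) simp
  have "real (card {f\<in>E. is_wedge e f}) \<le> 2 * (5/2) * sqrt ?W"
    using le s1 s2 s3 by linarith
  thus ?thesis by simp
qed

lemma sum_deg: assumes "finite E" shows "(\<Sum>e\<in>E. card {f\<in>E. is_wedge e f}) = 2 * num_wedges E"
proof -
  have "Oset E = Sigma E (\<lambda>e. {f\<in>E. is_wedge e f})" by (auto simp: Oset_def)
  hence "card (Oset E) = (\<Sum>e\<in>E. card {f\<in>E. is_wedge e f})" using assms by (simp add: card_SigmaI)
  thus ?thesis using card_Oset[OF assms] by simp
qed

lemma sum_degY: assumes "distinct es"
  shows "(\<Sum>e\<in>set es. card {f\<in>set es. is_wedge e f \<and> detected es (length es) e f}) = card (Dset es)"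
proof -
  have "Dset es = Sigma (set es) (\<lambda>e. {f\<in>set es. is_wedge e f \<and> detected es (length es) e f})" by (auto simp: Dset_def)
  thus ?thesis by (simp add: card_SigmaI)
qed


lemma ratio_good:
  fixes X Y \<mu> \<nu> \<delta> :: real
  assumes "0 < \<mu>" "0 \<le> \<nu>" "\<nu> \<le> \<mu>" "0 < \<delta>" "\<delta> \<le> 1/4"
    "\<bar>X - \<mu>\<bar> < \<delta> * \<mu>" "\<bar>Y - \<nu>\<bar> < \<delta> * \<mu>"
  shows "X > 0" "\<bar>Y / X - \<nu> / \<mu>\<bar> \<le> 8/3 * \<delta>"
proof -
  have "\<delta> * \<mu> \<le> 1/4 * \<mu>" using assms by (intro mult_right_mono) auto
  hence X34: "X \<ge> 3/4 * \<mu>" using assms(6) unfolding abs_less_iff by linarith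
  thus X0: "X > 0" using assms by simp
  have eq: "Y / X - \<nu> / \<mu> = ((Y - \<nu>) * \<mu> - \<nu> * (X - \<mu>)) / (X * \<mu>)"
    using X0 assms(1) by (simp add: field_simps)
  have n1: "\<bar>(Y - \<nu>) * \<mu>\<bar> \<le> \<delta> * \<mu> * \<mu>"
    using assms by (simp add: abs_mult mult_right_mono)
  have n2: "\<bar>\<nu> * (X - \<mu>)\<bar> \<le> \<mu> * (\<delta> * \<mu>)"
    using assms by (simp add: abs_mult) (intro mult_mono, auto)
  have num: "\<bar>(Y - \<nu>) * \<mu> - \<nu> * (X - \<mu>)\<bar> \<le> 2 * \<delta> * \<mu> * \<mu>"
  proof -
    have "\<bar>\<nu> * (X - \<mu>)\<bar> \<le> \<delta> * \<mu> * \<mu>" using n2 by (simp add: mult_ac)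
    thus ?thesis using abs_triangle_ineq4[of "(Y - \<nu>) * \<mu>" "\<nu> * (X - \<mu>)"] n1 by linarith
  qed
  have "\<bar>Y / X - \<nu> / \<mu>\<bar> = \<bar>(Y - \<nu>) * \<mu> - \<nu> * (X - \<mu>)\<bar> / (X * \<mu>)"
    using X0 assms(1) by (simp add: eq abs_divide abs_mult)
  also have "\<dots> \<le> 2 * \<delta> * \<mu> * \<mu> / (X * \<mu>)"
    using X0 assms(1) num by (intro divide_right_mono) auto
  also have "\<dots> = 2 * \<delta> * \<mu> / X" using assms(1) by (simp add: field_simps)
  also have "\<dots> \<le> 2 * \<delta> * \<mu> / (3/4 * \<mu>)"
    using X34 assms X0 by (intro divide_left_mono) auto
  also have "\<dots> = 8/3 * \<delta>" using assms(1) by (simp add: field_simps)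
  finally show "\<bar>Y / X - \<nu> / \<mu>\<bar> \<le> 8/3 * \<delta>" .
qed

lemma prob_as_exp: "measure_pmf.prob p A = measure_pmf.expectation p (indicator A :: _ \<Rightarrow> real)"
  by simp

lemma final_expect:
  fixes Q :: "'a pmf" and X Y :: "'a \<Rightarrow> real"
  assumes fin: "finite (set_pmf Q)"
    and Y0: "\<And>R. 0 \<le> Y R" and YX: "\<And>R. Y R \<le> X R"
    and mu: "0 < \<mu>" "0 \<le> \<nu>" "\<nu> \<le> \<mu>" and d: "0 < \<delta>" "\<delta> \<le> 1/4"
    and p1: "measure_pmf.prob Q {R. \<delta> * \<mu> \<le> \<bar>X R - \<mu>\<bar>} \<le> q1"
    and p2: "measure_pmf.prob Q {R. \<delta> * \<mu> \<le> \<bar>Y R - \<nu>\<bar>} \<le> q2"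
  shows "\<bar>\<nu> / \<mu> - measure_pmf.expectation Q (\<lambda>R. if X R = 0 then 0 else Y R / X R)\<bar> \<le> 8/3 * \<delta> + q1 + q2"
proof -
  let ?\<phi> = "\<lambda>R. if X R = 0 then 0 else Y R / X R"
  let ?B1 = "{R. \<delta> * \<mu> \<le> \<bar>X R - \<mu>\<bar>}" and ?B2 = "{R. \<delta> * \<mu> \<le> \<bar>Y R - \<nu>\<bar>}"
  have int: "integrable (measure_pmf Q) f" for f :: "'a \<Rightarrow> real" by (rule integrable_measure_pmf_finite[OF fin])
  have pw: "\<bar>?\<phi> R - \<nu> / \<mu>\<bar> \<le> 8/3 * \<delta> + indicator ?B1 R + indicator ?B2 R" for R
  proof (cases "R \<in> ?B1 \<or> R \<in> ?B2")
    case True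
    have phi01: "0 \<le> ?\<phi> R" "?\<phi> R \<le> 1" using Y0[of R] YX[of R]
      by (auto simp: divide_le_eq_1 le_less)
    have "0 \<le> \<nu> / \<mu>" "\<nu> / \<mu> \<le> 1" using mu by auto
    hence "\<bar>?\<phi> R - \<nu> / \<mu>\<bar> \<le> 1" using phi01 by linarith
    moreover have "(1::real) \<le> indicator ?B1 R + indicator ?B2 R" using True by (auto simp: indicator_def)
    ultimately show ?thesis using d by linarith
  next
    case False
    hence g: "\<bar>X R - \<mu>\<bar> < \<delta> * \<mu>" "\<bar>Y R - \<nu>\<bar> < \<delta> * \<mu>" by auto
    have "X R > 0" "\<bar>Y R / X R - \<nu> / \<mu>\<bar> \<le> 8/3 * \<delta>" using ratio_good[OF mu d g] by auto
    thus ?thesis using False by (simp add: indicator_def)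
  qed
  have "\<bar>\<nu> / \<mu> - measure_pmf.expectation Q ?\<phi>\<bar> = \<bar>measure_pmf.expectation Q (\<lambda>R. ?\<phi> R - \<nu> / \<mu>)\<bar>"
    by (subst Bochner_Integration.integral_diff[OF int int]) (simp add: measure_pmf.prob_space)
  also have "\<dots> \<le> measure_pmf.expectation Q (\<lambda>R. \<bar>?\<phi> R - \<nu> / \<mu>\<bar>)"
  proof -
    have a: "measure_pmf.expectation Q (\<lambda>R. ?\<phi> R - \<nu> / \<mu>) \<le> measure_pmf.expectation Q (\<lambda>R. \<bar>?\<phi> R - \<nu> / \<mu>\<bar>)"
      by (intro integral_mono int) auto
    have "- measure_pmf.expectation Q (\<lambda>R. ?\<phi> R - \<nu> / \<mu>) = measure_pmf.expectation Q (\<lambda>R. - (?\<phi> R - \<nu> / \<mu>))"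
      by (rule Bochner_Integration.integral_minus[symmetric])
    also have "\<dots> \<le> measure_pmf.expectation Q (\<lambda>R. \<bar>?\<phi> R - \<nu> / \<mu>\<bar>)"
      by (intro integral_mono int) auto
    finally show ?thesis using a by linarith
  qed
  also have "\<dots> \<le> measure_pmf.expectation Q (\<lambda>R. 8/3 * \<delta> + indicator ?B1 R + indicator ?B2 R)"
    by (intro integral_mono int pw)
  also have "\<dots> = 8/3 * \<delta> + measure_pmf.prob Q ?B1 + measure_pmf.prob Q ?B2"
    by (simp add: Bochner_Integration.integral_add[OF int int] measure_pmf.prob_space)
  also have "\<dots> \<le> 8/3 * \<delta> + q1 + q2" using p1 p2 by simp
  finally show ?thesis .
qed


lemma var_core:
  fixes s m w :: real
  assumes s: "s \<ge> 2" and m: "m > 0" and w: "w > 0"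
  shows "s*(s-1)*w^2/m^2 + 40* s^3*w^3/m^3 \<le> (2*(m/(s*w))^2 + 160*(m/(s*w))) * (s*(s-1)*w^2/m^2)^2"
proof -
  have s1: "s - 1 \<ge> 1" using s by simp
  have e1: "2*(m/(s*w))^2 * (s*(s-1)*w^2/m^2)^2 = (2*(s-1)^2) * (w^2/m^2)"
    using s m w by (simp add: field_simps power2_eq_square)
  have e2: "160*(m/(s*w)) * (s*(s-1)*w^2/m^2)^2 = (160* s*(s-1)^2) * (w^3/m^3)"
    using s m w by (simp add: field_simps power2_eq_square power3_eq_cube)
  have a1: "s*(s-1) \<le> 2*(s-1)^2"
  proof -
    have "s \<le> 2*(s-1)" using s by simp
    hence "s*(s-1) \<le> (2*(s-1))*(s-1)" using s1 by (intro mult_right_mono) auto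
    thus ?thesis by (simp add: power2_eq_square algebra_simps)
  qed
  have a2: "40* s^3 \<le> 160* s*(s-1)^2"
  proof -
    have "s \<le> 2*(s-1)" using s by simp
    hence "s^2 \<le> (2*(s-1))^2" using s by (intro power_mono) auto
    hence "s^2 \<le> 4*(s-1)^2" by (simp add: power2_eq_square algebra_simps)
    hence "s* s^2 \<le> s*(4*(s-1)^2)" using s by (intro mult_left_mono) auto
    thus ?thesis by (simp add: power3_eq_cube power2_eq_square algebra_simps)
  qed
  have "s*(s-1)*w^2/m^2 = (s*(s-1)) * (w^2/m^2)" by simp
  also have "\<dots> \<le> (2*(s-1)^2) * (w^2/m^2)" using a1 by (intro mult_right_mono) auto
  finally have b1: "s*(s-1)*w^2/m^2 \<le> 2*(m/(s*w))^2 * (s*(s-1)*w^2/m^2)^2" using e1 by simp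
  have "40* s^3*w^3/m^3 = (40* s^3) * (w^3/m^3)" by simp
  also have "\<dots> \<le> (160* s*(s-1)^2) * (w^3/m^3)" using a2 m w by (intro mult_right_mono) auto
  finally have b2: "40* s^3*w^3/m^3 \<le> 160*(m/(s*w)) * (s*(s-1)*w^2/m^2)^2" using e2 by simp
  show ?thesis using b1 b2 by (simp add: distrib_right)
qed

definition gX :: "edge \<Rightarrow> edge \<Rightarrow> real" where
  "gX e f = (if is_wedge e f then 1 else 0)"
definition gY :: "edge list \<Rightarrow> edge \<Rightarrow> edge \<Rightarrow> real" where
  "gY es e f = (if is_wedge e f \<and> detected es (length es) e f then 1 else 0)"

lemma closing_sym: "closing_edge e f = closing_edge f e"
  by (simp add: closing_edge_def Un_commute Int_commute)

lemma detected_sym: "detected es t e f = detected es t f e"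
  unfolding detected_def by (auto simp: closing_sym)

lemma sum_ind_card: "finite A \<Longrightarrow> (\<Sum>x\<in>A. if Pr x then 1 else 0 :: real) = real (card {x\<in>A. Pr x})"
  by (simp add: sum.inter_filter[symmetric])

lemma card_P2: "2 * card {(i,j). i < j \<and> j < (s::nat)} = s * (s - 1)"
proof (induction s)
  case 0 thus ?case by simp
next
  case (Suc s)
  have eq: "{(i,j). i < j \<and> j < Suc s} = {(i,j). i < j \<and> j < s} \<union> (\<lambda>i. (i,s)) ` {..<s}" by auto
  have fin: "finite {(i,j). i < j \<and> j < (s::nat)}"
    by (rule finite_subset[of _ "{..<s} \<times> {..<s}"]) auto
  have "card {(i,j). i < j \<and> j < Suc s} = card {(i,j). i < j \<and> j < s} + card ((\<lambda>i. (i,s)) ` {..<s})"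
    unfolding eq by (rule card_Un_disjoint) (use fin in auto)
  also have "card ((\<lambda>i. (i,s)) ` {..<s}) = s" by (subst card_image) (auto simp: inj_on_def)
  finally show ?case using Suc.IH by (cases s) (auto simp: algebra_simps)
qed


lemma measure_bind_fin:
  assumes "finite (set_pmf p)" "\<And>x. x \<in> set_pmf p \<Longrightarrow> finite (set_pmf (f x))"
  shows "measure_pmf.prob (p \<bind> f) A = measure_pmf.expectation p (\<lambda>x. measure_pmf.prob (f x) A)"
  unfolding prob_as_exp by (rule exp_bind_fin[OF assms])

lemma s_bounds:
  fixes S M T W c \<beta> :: real
  assumes c: "c > 0" and M: "M > 0" and b: "0 < \<beta>" "\<beta> \<le> 1" and T: "0 < T" "T \<le> W" "T \<le> M^2"
    and S: "S \<ge> c * M / (\<beta>^3 * sqrt T)"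
  shows "S \<ge> c" "M / (S * sqrt W) \<le> \<beta>^3 / c"
proof -
  have b3: "0 < \<beta>^3" "\<beta>^3 \<le> 1" using b by (auto simp: power_le_one)
  have sT: "0 < sqrt T" "sqrt T \<le> M"
    using T M real_sqrt_le_mono[OF T(3)] by auto
  have sW: "sqrt T \<le> sqrt W" using T by (simp add: real_sqrt_le_mono)
  have d1: "\<beta>^3 * sqrt T \<le> M" using b3 sT by (smt (verit) mult_left_le_one_le)
  have "c \<le> c * M / (\<beta>^3 * sqrt T)"
    using c d1 b3 sT by (simp add: le_divide_eq)
  thus "S \<ge> c" using S by linarith
  have pos: "0 < \<beta>^3 * sqrt T" using b3 sT by simp
  have "c * M \<le> S * (\<beta>^3 * sqrt T)" using S pos by (simp add: divide_le_eq)
  also have "\<dots> \<le> S * (\<beta>^3 * sqrt W)" using sW b3 \<open>S \<ge> c\<close> c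
    by (intro mult_left_mono) auto
  finally have h: "c * M \<le> \<beta>^3 * (S * sqrt W)" by (simp add: mult_ac)
  have SW: "0 < S * sqrt W" using \<open>S \<ge> c\<close> c sT sW by (intro mult_pos_pos) auto
  show "M / (S * sqrt W) \<le> \<beta>^3 / c"
    using h SW c by (simp add: divide_le_eq le_divide_eq mult_ac)
qed

lemma rho_bound:
  fixes r q :: real
  assumes "0 \<le> r" "r \<le> q" "q \<le> 1"
  shows "2 * r^2 + 160 * r \<le> 162 * q"
proof -
  have "r^2 \<le> r" using assms by (simp add: power2_eq_square mult_left_le_one_le)
  thus ?thesis using assms by linarith
qed


lemma main_bounds:
  fixes es :: "edge list" and \<beta> :: real and s :: nat and c :: real
  assumes cdef: "c = 10^6"
  assumes dist: "distinct es" and edges: "\<forall>e\<in>set es. is_edge e"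
    and T1: "num_triangles (set es) \<ge> 1" and Wm: "num_wedges (set es) \<ge> length es"
    and b: "0 < \<beta>" "\<beta> < 1"
    and sbig: "real s \<ge> c * real (length es) / (\<beta> ^ 3 * sqrt (real (num_triangles (set es))))"
  shows "\<bar>3 * real (num_triangles (set es)) / real (num_wedges (set es)) / 3 - measure_pmf.prob (sb_final_bit s es) {True}\<bar> < \<beta>
     \<and> measure_pmf.prob (sb_state s es (length es)) {st. \<bar>real (num_wedges (set es)) - sb_est s (length es) st\<bar> < \<beta> * real (num_wedges (set es))} > 1 - \<beta>"
proof -
  define E where "E = set es"
  define m where "m = length es"
  define Wn where "Wn = num_wedges E"
  define Tn where "Tn = num_triangles E"
  have cardE: "card E = m" using dist by (simp add: E_def m_def distinct_card)
  have finE: "finite E" by (simp add: E_def)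
  have edgesE: "\<forall>e\<in>E. is_edge e" using edges by (simp add: E_def)
  have cO: "card (Oset E) = 2 * Wn" using card_Oset[OF finE] by (simp add: Wn_def)
  have cD: "card (Dset es) = 2 * Tn" using card_Dset[OF dist edges] by (simp add: Tn_def E_def)
  have DO: "Dset es \<subseteq> Oset E" by (auto simp: Dset_def Oset_def E_def)
  have OEE: "Oset E \<subseteq> E \<times> E" by (auto simp: Oset_def)
  have finO: "finite (Oset E)" using OEE finE finite_subset by blast
  have TW: "Tn \<le> Wn" using card_mono[OF finO DO] cD cO by simp
  have Wm2: "2 * Wn \<le> m^2" using card_mono[OF _ OEE] cO cardE finE by (simp add: card_cartesian_product power2_eq_square)
  have T1': "Tn \<ge> 1" using T1 by (simp add: Tn_def E_def)
  have W1: "Wn \<ge> 1" using T1' TW by simp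
  have Ene: "E \<noteq> {}"
  proof
    assume "E = {}" hence "Oset E = {}" by (auto simp: Oset_def)
    thus False using cO W1 by simp
  qed
  have m1: "m \<ge> 1" using cardE Ene finE by (metis card_0_eq less_one not_less)
  define W where "W = real Wn"
  define T where "T = real Tn"
  define M where "M = real m"
  define S where "S = real s"
  define w where "w = sqrt W"
  have M0: "M > 0" using m1 by (simp add: M_def)
  have W0: "W \<ge> 1" using W1 by (simp add: W_def)
  have T0: "T \<ge> 1" using T1' by (simp add: T_def)
  have TWr: "T \<le> W" using TW by (simp add: T_def W_def)
  have TM: "T \<le> M^2"
  proof -
    have "real (2 * Wn) \<le> real (m^2)" using Wm2 by (simp only: of_nat_le_iff)
    hence "2 * W \<le> M^2" by (simp add: W_def M_def)
    thus ?thesis using TWr W0 by linarith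
  qed
  have w0: "w > 0" using W0 by (simp add: w_def)
  have Ww: "W = w^2" using W0 by (simp add: w_def)
  have c0: "c > 0" using cdef by simp
  have sb: "S \<ge> c * M / (\<beta>^3 * sqrt T)" using sbig by (simp add: S_def M_def T_def Tn_def E_def m_def)
  have Sc: "S \<ge> c" and rb: "M / (S * w) \<le> \<beta>^3 / c"
    using s_bounds[OF c0 M0 b(1) less_imp_le[OF b(2)] _ TWr TM sb] T0 by (auto simp: w_def)
  have S2: "S \<ge> 2" using Sc cdef by simp
  have s2: "s \<ge> 2" using S2 by (simp add: S_def)
  have b31: "\<beta>^3 \<le> 1" using b by (simp add: power_le_one)
  have bq: "\<beta>^3 / c \<le> 1" using b31 c0 cdef by simp
  have rpos: "0 \<le> M / (S * w)" using M0 S2 w0 by simp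
  have rho: "2 * (M / (S * w))^2 + 160 * (M / (S * w)) \<le> 162 * (\<beta>^3 / c)"
    by (rule rho_bound[OF rpos rb bq])
  have upmf: "set_pmf (pmf_of_set E) = E" using Ene finE by simp
  interpret VX: vsetup s "pmf_of_set E" "{}" gX
    by unfold_locales (auto simp: upmf finE gX_def is_wedge_sym)
  interpret VY: vsetup s "pmf_of_set E" "{}" "gY es"
    by unfold_locales (auto simp: upmf finE gY_def is_wedge_sym detected_sym)
  have Qeq: "VX.Q = Qt s es m" "VY.Q = Qt s es m"
  proof -
    have tk: "take m es = es" by (simp add: m_def)
    show "VX.Q = Qt s es m" "VY.Q = Qt s es m" unfolding VX.Q_def VY.Q_def unfolding Qt_def tk E_def by (rule refl)+
  qed
  have Peq: "VY.P = VX.P" by (simp add: VX.P_def VY.P_def)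
  have finP: "finite VX.P" by (rule VX.finP)
  have cP: "real (card VX.P) = S * (S - 1) / 2"
  proof -
    have "2 * card VX.P = s * (s - 1)" unfolding VX.P_def by (rule card_P2)
    hence "real (2 * card VX.P) = real (s * (s - 1))" by simp
    thus ?thesis using s2 by (simp add: S_def of_nat_diff)
  qed
  have ZX: "VX.Z R = real (card (wedge_pairs s R))" for R
  proof -
    have "VX.Z R = (\<Sum>p\<in>VX.P. if is_wedge (R (fst p)) (R (snd p)) then 1 else 0)"
      unfolding VX.Z_def gX_def by (rule refl)
    also have "\<dots> = real (card {p \<in> VX.P. is_wedge (R (fst p)) (R (snd p))})"
      by (rule sum_ind_card[OF finP])
    also have "{p \<in> VX.P. is_wedge (R (fst p)) (R (snd p))} = wedge_pairs s R"
      by (auto simp: VX.P_def wedge_pairs_def)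
    finally show ?thesis .
  qed
  have ZY: "VY.Z R = real (card (Cset s es m R))" for R
  proof -
    have "VY.Z R = (\<Sum>p\<in>VY.P. if is_wedge (R (fst p)) (R (snd p)) \<and> detected es m (R (fst p)) (R (snd p)) then 1 else 0)"
      unfolding VY.Z_def gY_def m_def by (rule refl)
    also have "\<dots> = real (card {p \<in> VY.P. is_wedge (R (fst p)) (R (snd p)) \<and> detected es m (R (fst p)) (R (snd p))})"
      by (rule sum_ind_card[OF VY.finP])
    also have "{p \<in> VY.P. is_wedge (R (fst p)) (R (snd p)) \<and> detected es m (R (fst p)) (R (snd p))} = Cset s es m R"
      by (auto simp: VY.P_def wedge_pairs_def Cset_def)
    finally show ?thesis .
  qed
  define wdeg where "wdeg a = card {b\<in>E. is_wedge a b}" for a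
  define ddeg where "ddeg a = card {b\<in>E. is_wedge a b \<and> detected es m a b}" for a
  have sumX: "(\<Sum>b\<in>E. gX a b) = real (wdeg a)" for a
    unfolding gX_def wdeg_def by (rule sum_ind_card[OF finE])
  have sumY: "(\<Sum>b\<in>E. gY es a b) = real (ddeg a)" for a
    unfolding gY_def ddeg_def m_def by (rule sum_ind_card[OF finE])
  have sw: "(\<Sum>a\<in>E. real (wdeg a)) = 2 * W"
  proof -
    have "(\<Sum>a\<in>E. wdeg a) = 2 * Wn" unfolding wdeg_def Wn_def by (rule sum_deg[OF finE])
    hence "real (\<Sum>a\<in>E. wdeg a) = real (2 * Wn)" by simp
    thus ?thesis by (simp add: W_def)
  qed
  have sd: "(\<Sum>a\<in>E. real (ddeg a)) = 2 * T"
  proof -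
    have "(\<Sum>a\<in>E. ddeg a) = 2 * Tn" unfolding ddeg_def E_def m_def using sum_degY[OF dist] cD by simp
    hence "real (\<Sum>a\<in>E. ddeg a) = real (2 * Tn)" by simp
    thus ?thesis by (simp add: T_def)
  qed
  have cE: "real (card E) = M" by (simp add: cardE M_def)
  have gXv: "VX.\<gamma> = 2 * W / M^2"
  proof -
    have "VX.\<gamma> = (\<Sum>a\<in>E. (\<Sum>b\<in>E. gX a b) / M) / M"
      unfolding VX.\<gamma>_def by (simp add: integral_pmf_of_set Ene finE cE sum_divide_distrib)
    also have "\<dots> = (\<Sum>a\<in>E. real (wdeg a)) / M / M" by (simp add: sumX sum_divide_distrib)
    finally show ?thesis by (simp add: sw power2_eq_square)
  qed
  have gYv: "VY.\<gamma> = 2 * T / M^2"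
  proof -
    have "VY.\<gamma> = (\<Sum>a\<in>E. (\<Sum>b\<in>E. gY es a b) / M) / M"
      unfolding VY.\<gamma>_def by (simp add: integral_pmf_of_set Ene finE cE sum_divide_distrib)
    also have "\<dots> = (\<Sum>a\<in>E. real (ddeg a)) / M / M" by (simp add: sumY sum_divide_distrib)
    finally show ?thesis by (simp add: sd power2_eq_square)
  qed
  have wdb: "real (wdeg a) \<le> 5 * w" if "a \<in> E" for a
    unfolding wdeg_def w_def W_def Wn_def using wedge_deg_bound[OF finE edgesE that W1[unfolded Wn_def]] .
  have dw: "ddeg a \<le> wdeg a" for a
    unfolding ddeg_def wdeg_def by (rule card_mono) (auto simp: finE)
  have etaX: "VX.\<eta> = (\<Sum>a\<in>E. (real (wdeg a) / M)^2) / M"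
    unfolding VX.\<eta>_def by (simp add: integral_pmf_of_set Ene finE cE sumX)
  have etaY: "VY.\<eta> = (\<Sum>a\<in>E. (real (ddeg a) / M)^2) / M"
    unfolding VY.\<eta>_def by (simp add: integral_pmf_of_set Ene finE cE sumY)
  have etaYX: "VY.\<eta> \<le> VX.\<eta>"
    unfolding etaX etaY using M0 dw
    by (intro divide_right_mono sum_mono power_mono) (auto intro: divide_right_mono)
  have etaXb: "VX.\<eta> \<le> 10 * w^3 / M^3"
  proof -
    have "(\<Sum>a\<in>E. (real (wdeg a) / M)^2) \<le> (\<Sum>a\<in>E. 5 * w * real (wdeg a) / M^2)"
    proof (intro sum_mono)
      fix a assume a: "a \<in> E"
      have "real (wdeg a) * real (wdeg a) \<le> 5 * w * real (wdeg a)"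
        using wdb[OF a] by (intro mult_right_mono) auto
      thus "(real (wdeg a) / M)^2 \<le> 5 * w * real (wdeg a) / M^2"
        by (simp add: power2_eq_square divide_right_mono)
    qed
    also have "\<dots> = 5 * w * (\<Sum>a\<in>E. real (wdeg a)) / M^2"
      by (simp add: sum_divide_distrib sum_distrib_left)
    also have "\<dots> = 10 * w^3 / M^2" by (simp add: sw Ww power2_eq_square power3_eq_cube)
    finally show ?thesis unfolding etaX using M0
      by (simp add: divide_right_mono power3_eq_cube power2_eq_square) (smt (verit) divide_divide_eq_left divide_right_mono)
  qed
  define \<mu> where "\<mu> = S * (S-1) * w^2 / M^2"
  define \<nu> where "\<nu> = S * (S-1) * T / M^2"
  have muX: "real (card VX.P) * VX.\<gamma> = \<mu>"
  proof -
    have "real (card VX.P) * VX.\<gamma> = S*(S-1)/2 * (2*W/M^2)" by (simp only: cP gXv)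
    also have "\<dots> = \<mu>" unfolding \<mu>_def Ww by simp
    finally show ?thesis .
  qed
  have nuY: "real (card VY.P) * VY.\<gamma> = \<nu>"
  proof -
    have "real (card VY.P) * VY.\<gamma> = S*(S-1)/2 * (2*T/M^2)" by (simp only: cP gYv)
    also have "\<dots> = \<nu>" unfolding \<nu>_def by simp
    finally show ?thesis .
  qed
  have S1: "S - 1 \<ge> 1" using S2 by simp
  have mu0: "\<mu> > 0" using S2 w0 M0 by (simp add: \<mu>_def)
  have nu0: "0 \<le> \<nu>" using S2 T0 M0 by (simp add: \<nu>_def)
  have numu: "\<nu> \<le> \<mu>" unfolding \<nu>_def \<mu>_def using TWr Ww S2 M0 S1
    by (intro divide_right_mono mult_left_mono) auto
  have q0: "0 \<le> \<beta>^3 / c" using b c0 by simp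
  have Vb: "\<mu> + 40 * S^3 * w^3 / M^3 \<le> 162 * (\<beta>^3 / c) * \<mu>^2"
  proof -
    have "\<mu> + 40 * S^3 * w^3 / M^3 \<le> (2*(M/(S*w))^2 + 160*(M/(S*w))) * \<mu>^2"
      unfolding \<mu>_def by (rule var_core[OF S2 M0 w0])
    also have "\<dots> \<le> 162 * (\<beta>^3 / c) * \<mu>^2" using rho by (intro mult_right_mono) auto
    finally show ?thesis .
  qed
  have VXb: "real (card VX.P) * VX.\<gamma> + 4 * real s ^ 3 * VX.\<eta> \<le> 162 * (\<beta>^3 / c) * \<mu>^2"
  proof -
    have "4 * real s ^ 3 * VX.\<eta> \<le> 4 * real s ^ 3 * (10 * w^3 / M^3)"
      using etaXb by (intro mult_left_mono) auto
    thus ?thesis using Vb muX by (simp add: S_def)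
  qed
  have VYb: "real (card VY.P) * VY.\<gamma> + 4 * real s ^ 3 * VY.\<eta> \<le> 162 * (\<beta>^3 / c) * \<mu>^2"
  proof -
    have "4 * real s ^ 3 * VY.\<eta> \<le> 4 * real s ^ 3 * VX.\<eta>"
      using etaYX by (intro mult_left_mono) auto
    thus ?thesis using VXb muX nuY numu by linarith
  qed
  have chX: "measure_pmf.prob (Qt s es m) {R. a \<le> \<bar>VX.Z R - \<mu>\<bar>} \<le> 162 * (\<beta>^3 / c) * \<mu>^2 / a^2" if a: "a > 0" for a
  proof -
    have "measure_pmf.prob VX.Q {R. a \<le> \<bar>VX.Z R - real (card VX.P) * VX.\<gamma>\<bar>} \<le> (real (card VX.P) * VX.\<gamma> + 4 * real s ^ 3 * VX.\<eta>) / a^2"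
      by (rule VX.Cheb[OF a])
    also have "\<dots> \<le> 162 * (\<beta>^3 / c) * \<mu>^2 / a^2" using VXb by (intro divide_right_mono) auto
    finally show ?thesis using Qeq muX by simp
  qed
  have chY: "measure_pmf.prob (Qt s es m) {R. a \<le> \<bar>VY.Z R - \<nu>\<bar>} \<le> 162 * (\<beta>^3 / c) * \<mu>^2 / a^2" if a: "a > 0" for a
  proof -
    have "measure_pmf.prob VY.Q {R. a \<le> \<bar>VY.Z R - real (card VY.P) * VY.\<gamma>\<bar>} \<le> (real (card VY.P) * VY.\<gamma> + 4 * real s ^ 3 * VY.\<eta>) / a^2"
      by (rule VY.Cheb[OF a])
    also have "\<dots> \<le> 162 * (\<beta>^3 / c) * \<mu>^2 / a^2" using VYb by (intro divide_right_mono) auto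
    finally show ?thesis using Qeq nuY by simp
  qed
  have pb1: "measure_pmf.prob (Qt s es m) {R. \<beta> * \<mu> \<le> \<bar>VX.Z R - \<mu>\<bar>} \<le> 162 * \<beta> / c"
  proof -
    have "measure_pmf.prob (Qt s es m) {R. \<beta> * \<mu> \<le> \<bar>VX.Z R - \<mu>\<bar>} \<le> 162 * (\<beta>^3 / c) * \<mu>^2 / (\<beta> * \<mu>)^2"
      using b mu0 by (intro chX) auto
    also have "\<dots> = 162 * \<beta> / c" using b mu0 c0 by (simp add: field_simps power2_eq_square power3_eq_cube)
    finally show ?thesis .
  qed
  have pb2: "measure_pmf.prob (Qt s es m) {R. \<beta>/4 * \<mu> \<le> \<bar>VX.Z R - \<mu>\<bar>} \<le> 2592 * \<beta> / c"
  proof -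
    have "measure_pmf.prob (Qt s es m) {R. \<beta>/4 * \<mu> \<le> \<bar>VX.Z R - \<mu>\<bar>} \<le> 162 * (\<beta>^3 / c) * \<mu>^2 / (\<beta>/4 * \<mu>)^2"
      using b mu0 by (intro chX) auto
    also have "\<dots> = 2592 * \<beta> / c" using b mu0 c0 by (simp add: field_simps power2_eq_square power3_eq_cube)
    finally show ?thesis .
  qed
  have pb3: "measure_pmf.prob (Qt s es m) {R. \<beta>/4 * \<mu> \<le> \<bar>VY.Z R - \<nu>\<bar>} \<le> 2592 * \<beta> / c"
  proof -
    have "measure_pmf.prob (Qt s es m) {R. \<beta>/4 * \<mu> \<le> \<bar>VY.Z R - \<nu>\<bar>} \<le> 162 * (\<beta>^3 / c) * \<mu>^2 / (\<beta>/4 * \<mu>)^2"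
      using b mu0 by (intro chY) auto
    also have "\<dots> = 2592 * \<beta> / c" using b mu0 c0 by (simp add: field_simps power2_eq_square power3_eq_cube)
    finally show ?thesis .
  qed
  have mle: "m \<le> length es" by (simp add: m_def)
  have stq: "sb_state s es m = map_pmf (\<lambda>R. (R, Cset s es m R)) (Qt s es m)"
    by (rule state_char[OF dist edges m1 mle])
  have finQt: "finite (set_pmf (Qt s es m))" using VX.finQ Qeq by simp
  have c162: "162 * \<beta> / c < \<beta>" using b cdef by simp
  define k where "k = M^2 / (S * (S - 1))"
  have k0: "k > 0" using M0 S2 by (simp add: k_def)
  have kmu: "\<mu> * k = W" using M0 S2 S1 by (simp add: k_def \<mu>_def Ww field_simps)
  have est_eq: "sb_est s m (R, C) = k * VX.Z R" for R C
    by (simp add: sb_est_def ZX k_def M_def S_def)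
  have pre: "(\<lambda>R. (R, Cset s es m R)) -` {st. \<bar>W - sb_est s m st\<bar> < \<beta> * W} = - {R. \<beta> * \<mu> \<le> \<bar>VX.Z R - \<mu>\<bar>}"
  proof (intro set_eqI)
    fix R
    have "W - sb_est s m (R, Cset s es m R) = k * (\<mu> - VX.Z R)" using kmu est_eq by (simp add: algebra_simps)
    hence e1: "\<bar>W - sb_est s m (R, Cset s es m R)\<bar> = k * \<bar>VX.Z R - \<mu>\<bar>" using k0 by (simp add: abs_mult abs_minus_commute)
    have e2: "\<beta> * W = k * (\<beta> * \<mu>)" using kmu by (simp add: mult_ac)
    have "(\<bar>W - sb_est s m (R, Cset s es m R)\<bar> < \<beta> * W) = (k * \<bar>VX.Z R - \<mu>\<bar> < k * (\<beta> * \<mu>))"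
      by (simp only: e1 e2)
    also have "\<dots> = (\<bar>VX.Z R - \<mu>\<bar> < \<beta> * \<mu>)" using k0 by (rule mult_less_cancel_left_pos)
    finally have "(\<bar>W - sb_est s m (R, Cset s es m R)\<bar> < \<beta> * W) = (\<bar>VX.Z R - \<mu>\<bar> < \<beta> * \<mu>)" .
    thus "R \<in> (\<lambda>R. (R, Cset s es m R)) -` {st. \<bar>W - sb_est s m st\<bar> < \<beta> * W} \<longleftrightarrow> R \<in> - {R. \<beta> * \<mu> \<le> \<bar>VX.Z R - \<mu>\<bar>}"
      by auto
  qed
  have estim: "measure_pmf.prob (sb_state s es m) {st. \<bar>W - sb_est s m st\<bar> < \<beta> * W} > 1 - \<beta>"
  proof -
    have "measure_pmf.prob (sb_state s es m) {st. \<bar>W - sb_est s m st\<bar> < \<beta> * W}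
        = measure_pmf.prob (Qt s es m) (- {R. \<beta> * \<mu> \<le> \<bar>VX.Z R - \<mu>\<bar>})"
      unfolding stq measure_map_pmf pre by (rule refl)
    also have "\<dots> = 1 - measure_pmf.prob (Qt s es m) {R. \<beta> * \<mu> \<le> \<bar>VX.Z R - \<mu>\<bar>}"
      using measure_pmf.prob_compl[of "{R. \<beta> * \<mu> \<le> \<bar>VX.Z R - \<mu>\<bar>}" "Qt s es m"]
      by (simp add: Compl_eq_Diff_UNIV)
    finally show ?thesis using pb1 c162 by linarith
  qed
  have outp: "measure_pmf.prob (sb_output s (R, Cset s es m R)) {True} = (if VX.Z R = 0 then 0 else VY.Z R / VX.Z R)" for R
  proof -
    let ?WP = "wedge_pairs s R" and ?C = "Cset s es m R"
    have finWP: "finite ?WP"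
      by (rule finite_subset[of _ "{..<s} \<times> {..<s}"]) (auto simp: wedge_pairs_def)
    have CW: "?C \<subseteq> ?WP" by (auto simp: Cset_def)
    show ?thesis
    proof (cases "?WP = {}")
      case True
      thus ?thesis by (simp add: sb_output_def ZX)
    next
      case False
      have "measure_pmf.prob (sb_output s (R, ?C)) {True} = measure_pmf.prob (pmf_of_set ?WP) ((\<lambda>p. p \<in> ?C) -` {True})"
        using False by (simp add: sb_output_def)
      also have "\<dots> = real (card (?WP \<inter> ((\<lambda>p. p \<in> ?C) -` {True}))) / real (card ?WP)"
        using False finWP by (simp add: measure_pmf_of_set)
      also have "?WP \<inter> ((\<lambda>p. p \<in> ?C) -` {True}) = ?C" using CW by auto
      finally show ?thesis using False finWP by (simp add: ZX ZY)
    qed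
  qed
  have fb: "measure_pmf.prob (sb_final_bit s es) {True} = measure_pmf.expectation (Qt s es m) (\<lambda>R. if VX.Z R = 0 then 0 else VY.Z R / VX.Z R)"
  proof -
    have "sb_final_bit s es = Qt s es m \<bind> (\<lambda>R. sb_output s (R, Cset s es m R))"
      unfolding sb_final_bit_def m_def[symmetric] stq by (simp add: bind_map_pmf)
    hence "measure_pmf.prob (sb_final_bit s es) {True} = measure_pmf.expectation (Qt s es m) (\<lambda>R. measure_pmf.prob (sb_output s (R, Cset s es m R)) {True})"
      by (simp add: measure_bind_fin[OF finQt])
    thus ?thesis by (simp add: outp)
  qed
  have Y0: "0 \<le> VY.Z R" for R by (simp add: ZY)
  have YX: "VY.Z R \<le> VX.Z R" for R
  proof -
    have "finite (wedge_pairs s R)"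
      by (rule finite_subset[of _ "{..<s} \<times> {..<s}"]) (auto simp: wedge_pairs_def)
    hence "card (Cset s es m R) \<le> card (wedge_pairs s R)" by (rule card_mono) (auto simp: Cset_def)
    thus ?thesis by (simp add: ZX ZY)
  qed
  have fe: "\<bar>\<nu> / \<mu> - measure_pmf.expectation (Qt s es m) (\<lambda>R. if VX.Z R = 0 then 0 else VY.Z R / VX.Z R)\<bar>
      \<le> 8/3 * (\<beta>/4) + 2592 * \<beta> / c + 2592 * \<beta> / c"
    by (rule final_expect[OF finQt Y0 YX mu0 nu0 numu _ _ pb2 pb3]) (use b in auto)
  have numu': "\<nu> / \<mu> = T / W"
    using S2 S1 M0 w0 by (simp add: \<nu>_def \<mu>_def Ww field_simps)
  have expect: "\<bar>T / W - measure_pmf.prob (sb_final_bit s es) {True}\<bar> < \<beta>"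
  proof -
    have "8/3 * (\<beta>/4) + 2592 * \<beta> / c + 2592 * \<beta> / c < \<beta>" using b cdef by simp
    thus ?thesis using fe numu' fb by linarith
  qed
  have conv: "real (num_triangles (set es)) = T" "real (num_wedges (set es)) = W" "length es = m"
    by (simp_all add: T_def Tn_def W_def Wn_def E_def m_def)
  show ?thesis unfolding conv using expect estim by simp
qed


theorem mainTheorem1:
  "\<exists>c::real. c > 0 \<and>
    (\<forall>(es :: edge list) (\<beta> :: real) (s :: nat).
       distinct es \<longrightarrow> (\<forall>e\<in>set es. is_edge e) \<longrightarrow>
       num_triangles (set es) \<ge> 1 \<longrightarrow>
       num_wedges (set es) \<ge> length es \<longrightarrow>
       0 < \<beta> \<longrightarrow> \<beta> < 1 \<longrightarrow>
       real s \<ge> c * real (length es) / (\<beta> ^ 3 * sqrt (real (num_triangles (set es)))) \<longrightarrow>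
       (let m = length es; W = real (num_wedges (set es));
            \<kappa> = 3 * real (num_triangles (set es)) / W
        in \<bar>\<kappa> / 3 - measure_pmf.prob (sb_final_bit s es) {True}\<bar> < \<beta> \<and>
           measure_pmf.prob (sb_state s es m) {st. \<bar>W - sb_est s m st\<bar> < \<beta> * W} > 1 - \<beta>))"
    apply (rule exI[where x="10^6"])
  apply (intro conjI allI impI)
   apply simp
  unfolding Let_def
  apply (rule main_bounds[OF refl])
        apply assumption+
  done

end
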